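(* For $r\ge1$, in $\mathcal H^{\mathsf c}_{r,R}$ one has $$x_{(r)}\,c_{q,r}=c'_{q,r}\,x_{(r)},$$ and, when $q$ is invertible in $R$, $y_{(r)}\,c'_{q,r}=c_{q,r}\,y_{(r)}$.
   Context: Let $R$ be a commutative ring in which $2$ is not a zero divisor, and $q\in R$. $\mathcal H^{\mathsf c}_{r,R}$ is the associative $R$-superalgebra with even generators $T_1,\dots,T_{r-1}$ and odd generators $c_1,\dots,c_r$ subject to: $c_i^2=-1$, $c_ic_j=-c_jc_i$ ($i\ne j$); $(T_i-q)(T_i+1)=0$; $T_iT_{i'}=T_{i'}T_i$ for $|i-i'|>1$; $T_iT_{i+1}T_i=T_{i+1}T_iT_{i+1}$; $T_ic_j=c_jT_i$ for $j\ne i,i+1$; $T_ic_i=c_{i+1}T_i$; $T_ic_{i+1}=c_iT_i-(q-1)(c_i-c_{i+1})$. $T_w$ is defined via reduced expressions. $x_{(r)}=\sum_{w\in\mathfrak S_r}T_w$ and $y_{(r)}=\sum_{w\in\mathfrak S_r}(-q^{-1})^{\ell(w)}T_w$. Further $c_{q,r}=q^{r-1}c_1+q^{r-2}c_2+\cdots+qc_{r-1}+c_r$ and $c'_{q,r}=c_1+qc_2+\cdots+q^{r-1}c_r$. *)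

theory Defs
  imports "HOL-Combinatorics.Combinatorics"
begin

definition perm_length :: "nat \<Rightarrow> (nat \<Rightarrow> nat) \<Rightarrow> nat" where
  "perm_length r w = card {(i, j). 1 \<le> i \<and> i < j \<and> j \<le> r \<and> w j < w i}"

definition simple_trans :: "nat \<Rightarrow> nat \<Rightarrow> nat" where
  "simple_trans i = transpose i (Suc i)"

definition reduced_word :: "nat \<Rightarrow> (nat \<Rightarrow> nat) \<Rightarrow> nat list \<Rightarrow> bool" where
  "reduced_word r w ws \<longleftrightarrow>
     set ws \<subseteq> {1..<r} \<and> length ws = perm_length r w \<and>
     foldr (\<lambda>i f. simple_trans i \<circ> f) ws id = w"

definition Tw :: "nat \<Rightarrow> (nat \<Rightarrow> 'a::monoid_mult) \<Rightarrow> (nat \<Rightarrow> nat) \<Rightarrow> 'a" where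
  "Tw r T w = prod_list (map T (SOME ws. reduced_word r w ws))"

definition x_sym :: "nat \<Rightarrow> (nat \<Rightarrow> 'a::ring_1) \<Rightarrow> 'a" where
  "x_sym r T = (\<Sum>w\<in>{w. w permutes {1..r}}. Tw r T w)"

text \<open>y_(r) = sum (-q^{-1})^{l(w)} T_w, with qinv the image of q^{-1}.\<close>
definition y_sym :: "nat \<Rightarrow> 'a::ring_1 \<Rightarrow> (nat \<Rightarrow> 'a) \<Rightarrow> 'a" where
  "y_sym r qinv T = (\<Sum>w\<in>{w. w permutes {1..r}}. (- qinv) ^ perm_length r w * Tw r T w)"

definition c_q :: "nat \<Rightarrow> 'a::ring_1 \<Rightarrow> (nat \<Rightarrow> 'a) \<Rightarrow> 'a" where
  "c_q r q c = (\<Sum>k=1..r. q ^ (r - k) * c k)"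

definition c_q' :: "nat \<Rightarrow> 'a::ring_1 \<Rightarrow> (nat \<Rightarrow> 'a) \<Rightarrow> 'a" where
  "c_q' r q c = (\<Sum>k=1..r. q ^ (k - 1) * c k)"

text \<open>The defining relations of the Hecke-Clifford superalgebra H^c_{r,R}, for an
  R-algebra A with structure map phi (central ring homomorphism R -> A).\<close>
definition HC_relations :: "nat \<Rightarrow> 'a::ring_1 \<Rightarrow> (nat \<Rightarrow> 'a) \<Rightarrow> (nat \<Rightarrow> 'a) \<Rightarrow> bool" where
  "HC_relations r q T c \<longleftrightarrow>
     (\<forall>i\<in>{1..r}. c i * c i = -1) \<and>
     (\<forall>i\<in>{1..r}. \<forall>j\<in>{1..r}. i \<noteq> j \<longrightarrow> c i * c j = - (c j * c i)) \<and>
     (\<forall>i\<in>{1..<r}. (T i - q) * (T i + 1) = 0) \<and>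
     (\<forall>i\<in>{1..<r}. \<forall>i'\<in>{1..<r}. (i + 1 < i' \<or> i' + 1 < i) \<longrightarrow> T i * T i' = T i' * T i) \<and>
     (\<forall>i. 1 \<le> i \<and> i + 1 < r \<longrightarrow> T i * T (i+1) * T i = T (i+1) * T i * T (i+1)) \<and>
     (\<forall>i\<in>{1..<r}. \<forall>j\<in>{1..r}. j \<noteq> i \<and> j \<noteq> i + 1 \<longrightarrow> T i * c j = c j * T i) \<and>
     (\<forall>i\<in>{1..<r}. T i * c i = c (i+1) * T i) \<and>
     (\<forall>i\<in>{1..<r}. T i * c (i+1) = c i * T i - (q - 1) * (c i - c (i+1)))"

definition central_ring_hom :: "('r::comm_ring_1 \<Rightarrow> 'a::ring_1) \<Rightarrow> bool" where
  "central_ring_hom \<phi> \<longleftrightarrow> \<phi> 1 = 1 \<and> (\<forall>x y. \<phi> (x + y) = \<phi> x + \<phi> y) \<and>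
     (\<forall>x y. \<phi> (x * y) = \<phi> x * \<phi> y) \<and> (\<forall>x a. \<phi> x * a = a * \<phi> x)"

end

theory Submission
  imports Defs
begin


definition wp :: "nat list \<Rightarrow> nat \<Rightarrow> nat" where
  "wp ws = foldr (\<lambda>i f. simple_trans i \<circ> f) ws id"

lemma wp_simps[simp]: "wp [] = id" "wp (i # ws) = simple_trans i \<circ> wp ws"
  by (simp_all add: wp_def)

lemma wp_append: "wp (xs @ ys) = wp xs \<circ> wp ys"
  by (induction xs) auto

definition Inv :: "nat \<Rightarrow> (nat \<Rightarrow> nat) \<Rightarrow> (nat \<times> nat) set" where
  "Inv r w = {(i, j). 1 \<le> i \<and> i < j \<and> j \<le> r \<and> w j < w i}"

lemma Inv_finite[simp]: "finite (Inv r w)"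
  by (rule finite_subset[of _ "{1..r} \<times> {1..r}"]) (auto simp: Inv_def)

lemma pl_Inv: "perm_length r w = card (Inv r w)"
  by (simp add: perm_length_def Inv_def)

lemma tr_mono:
  assumes "\<not> (u = i \<and> v = Suc i)" "\<not> (u = Suc i \<and> v = i)"
  shows "(transpose i (Suc i) u < transpose i (Suc i) v) = (u < v)"
  using assms by (auto simp: transpose_def)

lemma st_involutive[simp]: "simple_trans i \<circ> simple_trans i = id"
  "simple_trans i (simple_trans i x) = x"
  by (simp_all add: simple_trans_def)

lemma st_permutes: "1 \<le> i \<Longrightarrow> i < r \<Longrightarrow> simple_trans i permutes {1..r}"
  unfolding simple_trans_def by (rule permutes_swap_id) auto

lemma inv_st[simp]: "inv (simple_trans i) = simple_trans i"
  by (simp add: simple_trans_def)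

lemma len_left:
  assumes w: "w permutes {1..r}" and i: "1 \<le> i" "i < r"
  shows "inv w i < inv w (Suc i) \<Longrightarrow> perm_length r (simple_trans i \<circ> w) = Suc (perm_length r w)"
    and "inv w (Suc i) < inv w i \<Longrightarrow> Suc (perm_length r (simple_trans i \<circ> w)) = perm_length r w"
proof -
  define a where "a = inv w i"
  define b where "b = inv w (Suc i)"
  have wi: "inv w permutes {1..r}" using w by (rule permutes_inv)
  have a: "a \<in> {1..r}" unfolding a_def using permutes_in_image[OF wi] i by auto
  have b: "b \<in> {1..r}" unfolding b_def using permutes_in_image[OF wi] i by auto
  have wa: "w a = i" unfolding a_def using permutes_inverses(1)[OF w] .
  have wb: "w b = Suc i" unfolding b_def using permutes_inverses(1)[OF w] .
  have key: "(simple_trans i (w y) < simple_trans i (w x)) = (w y < w x)"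
    if "\<not> (x = a \<and> y = b)" "\<not> (x = b \<and> y = a)" "x \<noteq> y" for x y
  proof -
    have "\<not> (w y = i \<and> w x = Suc i)" using that permutes_inj[OF w] wa wb
      by (metis injD)
    moreover have "\<not> (w y = Suc i \<and> w x = i)" using that permutes_inj[OF w] wa wb
      by (metis injD)
    ultimately show ?thesis unfolding simple_trans_def by (rule tr_mono)
  qed
  {
    assume ab: "inv w i < inv w (Suc i)"
    hence ab': "a < b" by (simp add: a_def b_def)
    have eq: "Inv r (simple_trans i \<circ> w) = insert (a, b) (Inv r w)"
    proof (rule set_eqI, clarify)
      fix x y
      show "((x, y) \<in> Inv r (simple_trans i \<circ> w)) = ((x, y) \<in> insert (a, b) (Inv r w))"
      proof (cases "x = a \<and> y = b")
        case True thus ?thesis using a b ab' wa wb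
          by (auto simp: Inv_def simple_trans_def)
      next
        case False
        show ?thesis
        proof (cases "x = b \<and> y = a")
          case True thus ?thesis using ab' by (auto simp: Inv_def)
        next
          case F2: False
          show ?thesis using key[OF False F2] False by (auto simp: Inv_def)
        qed
      qed
    qed
    have "(a, b) \<notin> Inv r w" using wa wb by (auto simp: Inv_def)
    thus "perm_length r (simple_trans i \<circ> w) = Suc (perm_length r w)"
      by (simp add: pl_Inv eq)
  }
  {
    assume ab: "inv w (Suc i) < inv w i"
    hence ab': "b < a" by (simp add: a_def b_def)
    have eq: "Inv r w = insert (b, a) (Inv r (simple_trans i \<circ> w))"
    proof (rule set_eqI, clarify)
      fix x y
      show "((x, y) \<in> Inv r w) = ((x, y) \<in> insert (b, a) (Inv r (simple_trans i \<circ> w)))"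
      proof (cases "x = b \<and> y = a")
        case True thus ?thesis using a b ab' wa wb
          by (auto simp: Inv_def simple_trans_def)
      next
        case False
        show ?thesis
        proof (cases "x = a \<and> y = b")
          case True thus ?thesis using ab' by (auto simp: Inv_def)
        next
          case F2: False
          show ?thesis using key[OF F2 False] False by (auto simp: Inv_def)
        qed
      qed
    qed
    have "(b, a) \<notin> Inv r (simple_trans i \<circ> w)" using wa wb
      by (auto simp: Inv_def simple_trans_def)
    thus "Suc (perm_length r (simple_trans i \<circ> w)) = perm_length r w"
      by (simp add: pl_Inv eq)
  }
qed

lemma len_inv:
  assumes w: "w permutes {1..r}"
  shows "perm_length r (inv w) = perm_length r w"
proof -
  have wi: "inv w permutes {1..r}" using w by (rule permutes_inv)
  let ?f = "\<lambda>(a, b). (w b, w a)"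
  have inj: "inj_on ?f (Inv r w)"
    using permutes_inj[OF w] by (auto simp: inj_on_def inj_def)
  have img: "?f ` Inv r w = Inv r (inv w)"
  proof (rule set_eqI, clarify)
    fix x y
    show "((x, y) \<in> ?f ` Inv r w) = ((x, y) \<in> Inv r (inv w))"
    proof
      assume "(x, y) \<in> ?f ` Inv r w"
      then obtain a b where ab: "(a, b) \<in> Inv r w" "x = w b" "y = w a" by auto
      have "a \<in> {1..r}" "b \<in> {1..r}" using ab(1) by (auto simp: Inv_def)
      hence "w a \<in> {1..r}" "w b \<in> {1..r}" using permutes_in_image[OF w] by auto
      thus "(x, y) \<in> Inv r (inv w)" using ab permutes_inverses(2)[OF w]
        by (auto simp: Inv_def)
    next
      assume xy: "(x, y) \<in> Inv r (inv w)"
      have "x \<in> {1..r}" "y \<in> {1..r}" using xy by (auto simp: Inv_def)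
      hence "inv w x \<in> {1..r}" "inv w y \<in> {1..r}" using permutes_in_image[OF wi] by auto
      hence "(inv w y, inv w x) \<in> Inv r w" using xy permutes_inverses(1)[OF w]
        by (auto simp: Inv_def)
      moreover have "?f (inv w y, inv w x) = (x, y)" using permutes_inverses(1)[OF w] by simp
      ultimately show "(x, y) \<in> ?f ` Inv r w" by (metis image_eqI)
    qed
  qed
  show ?thesis using card_image[OF inj] img by (simp add: pl_Inv)
qed

lemma len_right:
  assumes w: "w permutes {1..r}" and i: "1 \<le> i" "i < r"
  shows "w i < w (Suc i) \<Longrightarrow> perm_length r (w \<circ> simple_trans i) = Suc (perm_length r w)"
    and "w (Suc i) < w i \<Longrightarrow> Suc (perm_length r (w \<circ> simple_trans i)) = perm_length r w"
proof -
  have wi: "inv w permutes {1..r}" using w by (rule permutes_inv)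
  have ws: "w \<circ> simple_trans i permutes {1..r}" by (rule permutes_compose[OF st_permutes[OF i] w])
  have e: "inv (w \<circ> simple_trans i) = simple_trans i \<circ> inv w"
    using o_inv_distrib[OF permutes_bij[OF w] permutes_bij[OF st_permutes[OF i]]] by simp
  have iw: "inv (inv w) = w" using permutes_inv_inv[OF w] .
  show "w i < w (Suc i) \<Longrightarrow> perm_length r (w \<circ> simple_trans i) = Suc (perm_length r w)"
    using len_left(1)[OF wi i] len_inv[OF ws] len_inv[OF w] e iw by simp
  show "w (Suc i) < w i \<Longrightarrow> Suc (perm_length r (w \<circ> simple_trans i)) = perm_length r w"
    using len_left(2)[OF wi i] len_inv[OF ws] len_inv[OF w] e iw by simp
qed

lemma wp_permutes: "set ws \<subseteq> {1..<r} \<Longrightarrow> wp ws permutes {1..r}"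
proof (induction ws)
  case (Cons i ws)
  hence h: "wp ws permutes {1..r}" "simple_trans i permutes {1..r}" using st_permutes[of i r] by auto
  show ?case using permutes_compose[OF h(1) h(2)] by (simp add: comp_def)
qed (simp add: permutes_id)

lemma len_id[simp]: "perm_length r id = 0"
proof -
  have "Inv r id = {}" by (auto simp: Inv_def)
  thus ?thesis by (simp only: pl_Inv) simp
qed

lemma len_id'[simp]: "perm_length r (\<lambda>a. a) = 0"
  using len_id by (simp add: id_def)

lemma len_step_le:
  assumes w: "w permutes {1..r}" and i: "1 \<le> i" "i < r"
  shows "perm_length r (simple_trans i \<circ> w) \<le> Suc (perm_length r w)"
proof -
  have "inv w i \<noteq> inv w (Suc i)" using permutes_inj[OF permutes_inv[OF w]] by (metis injD n_not_Suc_n)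
  thus ?thesis using len_left[OF w i] by (metis le_SucI le_refl linorder_neqE_nat lessI less_imp_le)
qed

lemma len_wp_le: "set ws \<subseteq> {1..<r} \<Longrightarrow> perm_length r (wp ws) \<le> length ws"
proof (induction ws)
  case Nil thus ?case by simp
next
  case (Cons i ws)
  hence "perm_length r (wp ws) \<le> length ws" by simp
  moreover have "perm_length r (simple_trans i \<circ> wp ws) \<le> Suc (perm_length r (wp ws))"
    using Cons.prems by (intro len_step_le wp_permutes) auto
  ultimately show ?case by (simp add: comp_def)
qed

lemma no_inv_id:
  assumes w: "w permutes {1..r}" and e: "Inv r w = {}"
  shows "w = id"
proof (rule ccontr)
  assume "w \<noteq> id"
  then obtain x0 where "w x0 \<noteq> x0" by (auto simp: fun_eq_iff)
  then obtain x where x: "w x \<noteq> x" and xmin: "\<And>y. y < x \<Longrightarrow> w y = y"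
    using exists_least_iff[of "\<lambda>x. w x \<noteq> x"] by blast
  have xr: "x \<in> {1..r}" using x permutes_not_in[OF w] by blast
  define z where "z = inv w x"
  have wz: "w z = x" unfolding z_def using permutes_inverses(1)[OF w] .
  have zr: "z \<in> {1..r}" unfolding z_def using permutes_in_image[OF permutes_inv[OF w]] xr by simp
  have "z \<noteq> x" using wz x by auto
  moreover have "\<not> z < x" using xmin wz x by (metis less_irrefl)
  ultimately have zx: "x < z" by simp
  have "\<not> w x < x"
  proof
    assume "w x < x"
    hence "w (w x) = w x" by (rule xmin)
    hence "w x = x" using permutes_inj[OF w] by (metis injD)
    thus False using x by simp
  qed
  hence "x < w x" using x by simp
  hence "(x, z) \<in> Inv r w" using xr zr zx wz by (auto simp: Inv_def)
  thus False using e by simp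
qed

lemma ivt_desc: "m \<le> n \<Longrightarrow> (f::nat\<Rightarrow>nat) n < f m \<Longrightarrow> \<exists>i. m \<le> i \<and> i < n \<and> f (Suc i) < f i"
proof (induction n)
  case 0 thus ?case by simp
next
  case (Suc n)
  have mn: "m \<le> n"
  proof (rule ccontr)
    assume "\<not> m \<le> n"
    hence "m = Suc n" using Suc.prems(1) by simp
    thus False using Suc.prems(2) by simp
  qed
  show ?case
  proof (cases "f n < f m")
    case True
    then obtain i where "m \<le> i" "i < n" "f (Suc i) < f i" using Suc.IH mn by blast
    thus ?thesis by (intro exI[of _ i]) simp
  next
    case False
    thus ?thesis using mn Suc.prems(2) by (intro exI[of _ n]) simp
  qed
qed

lemma exists_descent:
  assumes w: "w permutes {1..r}" and ab: "(a, b) \<in> Inv r w"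
  shows "\<exists>i. 1 \<le> i \<and> i < r \<and> inv w (Suc i) < inv w i"
proof -
  have a: "a \<in> {1..r}" "b \<in> {1..r}" "a < b" "w b < w a" using ab by (auto simp: Inv_def)
  have wa: "w a \<in> {1..r}" using a(1) permutes_in_image[OF w] by simp
  have wb: "w b \<in> {1..r}" using a(2) permutes_in_image[OF w] by simp
  have e1: "inv w (w a) = a" by (rule permutes_inverses(2)[OF w])
  have e2: "inv w (w b) = b" by (rule permutes_inverses(2)[OF w])
  have "inv w (w a) < inv w (w b)" unfolding e1 e2 by (rule a(3))
  then obtain i where i: "w b \<le> i" "i < w a" "inv w (Suc i) < inv w i"
    using ivt_desc[of "w b" "w a" "inv w"] a(4) by fastforce
  have "1 \<le> i" "i < r" using i(1,2) wa wb by auto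
  thus ?thesis using i(3) by blast
qed

lemma reduced_exists:
  assumes "w permutes {1..r}"
  shows "\<exists>ws. reduced_word r w ws"
  using assms
proof (induction "perm_length r w" arbitrary: w)
  case 0
  hence "Inv r w = {}" by (simp add: pl_Inv)
  hence "w = id" using no_inv_id 0 by blast
  thus ?case by (intro exI[of _ "[]"]) (simp add: reduced_word_def wp_def[symmetric] id_def)
next
  case (Suc n)
  hence "Inv r w \<noteq> {}" by (metis card.empty nat.distinct(1) pl_Inv)
  then obtain a b where "(a, b) \<in> Inv r w" by auto
  then obtain i where i: "1 \<le> i" "i < r" "inv w (Suc i) < inv w i"
    using exists_descent[OF Suc.prems] by blast
  have L: "Suc (perm_length r (simple_trans i \<circ> w)) = perm_length r w"
    using len_left(2)[OF Suc.prems i] .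
  have p: "simple_trans i \<circ> w permutes {1..r}"
    using permutes_compose[OF Suc.prems st_permutes[OF i(1,2)]] .
  obtain ws where ws: "reduced_word r (simple_trans i \<circ> w) ws"
    using Suc.hyps(1)[OF _ p] L Suc.hyps(2) by auto
  have "wp (i # ws) = w" using ws
    by (simp add: reduced_word_def wp_def[symmetric] comp_assoc[symmetric])
  hence "reduced_word r w (i # ws)" using ws i L
    by (auto simp: reduced_word_def wp_def[symmetric])
  thus ?case by blast
qed

lemma rw_wp: "reduced_word r w ws \<Longrightarrow> wp ws = w"
  by (simp add: reduced_word_def wp_def)

lemma rw_perm: "reduced_word r w ws \<Longrightarrow> w permutes {1..r}"
  using wp_permutes[of ws r] by (auto simp: reduced_word_def wp_def)

lemma rw_cons:
  assumes "reduced_word r w (i # u)"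
  shows "reduced_word r (simple_trans i \<circ> w) u" "inv w (Suc i) < inv w i"
    "1 \<le> i" "i < r"
proof -
  have w: "w permutes {1..r}" using rw_perm[OF assms] .
  have i: "1 \<le> i" "i < r" using assms by (auto simp: reduced_word_def)
  thus "1 \<le> i" "i < r" by auto
  have wu: "wp u = simple_trans i \<circ> w" using rw_wp[OF assms]
    by (auto simp: comp_assoc[symmetric])
  have su: "set u \<subseteq> {1..<r}" using assms by (auto simp: reduced_word_def)
  have len: "length u + 1 = perm_length r w" using assms by (auto simp: reduced_word_def)
  have le: "perm_length r (simple_trans i \<circ> w) \<le> length u" using len_wp_le[OF su] wu by simp
  have ne: "inv w i \<noteq> inv w (Suc i)" using permutes_inj[OF permutes_inv[OF w]] by (metis injD n_not_Suc_n)
  show d: "inv w (Suc i) < inv w i"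
  proof (rule ccontr)
    assume "\<not> ?thesis"
    hence "inv w i < inv w (Suc i)" using ne by simp
    hence "perm_length r (simple_trans i \<circ> w) = Suc (perm_length r w)" using len_left(1)[OF w i] by simp
    thus False using le len by simp
  qed
  have "Suc (perm_length r (simple_trans i \<circ> w)) = perm_length r w" using len_left(2)[OF w i d] .
  thus "reduced_word r (simple_trans i \<circ> w) u" using wu su len
    by (simp add: reduced_word_def wp_def[symmetric])
qed

lemma st_apply: "simple_trans i x = (if x = i then Suc i else if x = Suc i then i else x)"
  by (auto simp: simple_trans_def transpose_def)

lemma st_comm_pt: "Suc i < j \<or> Suc j < i \<Longrightarrow> simple_trans i (simple_trans j x) = simple_trans j (simple_trans i x)"
  by (auto simp: st_apply)

lemma st_braid_pt: "simple_trans i (simple_trans (Suc i) (simple_trans i x)) =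
   simple_trans (Suc i) (simple_trans i (simple_trans (Suc i) x))"
  by (auto simp: st_apply)

lemma inv_st_comp:
  assumes w: "w permutes {1..r}" and i: "1 \<le> i" "i < r"
  shows "inv (simple_trans i \<circ> w) = inv w \<circ> simple_trans i"
  using o_inv_distrib[OF permutes_bij[OF st_permutes[OF i]] permutes_bij[OF w]] by simp

lemma matsumoto:
  fixes T :: "nat \<Rightarrow> 'a::monoid_mult"
  assumes comm: "\<And>i j. 1 \<le> i \<Longrightarrow> i < r \<Longrightarrow> 1 \<le> j \<Longrightarrow> j < r \<Longrightarrow> Suc i < j \<or> Suc j < i \<Longrightarrow> T i * T j = T j * T i"
    and braid: "\<And>i. 1 \<le> i \<Longrightarrow> Suc i < r \<Longrightarrow> T i * T (Suc i) * T i = T (Suc i) * T i * T (Suc i)"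
  shows "reduced_word r w ws \<Longrightarrow> reduced_word r w vs \<Longrightarrow> prod_list (map T ws) = prod_list (map T vs)"
proof (induction "length ws" arbitrary: w ws vs rule: less_induct)
  case less
  note IH = less.hyps
  have lw: "length ws = perm_length r w" "length vs = perm_length r w"
    using less.prems by (auto simp: reduced_word_def)
  have w: "w permutes {1..r}" using rw_perm[OF less.prems(1)] .
  show ?case
  proof (cases ws)
    case Nil
    hence "vs = []" using lw by simp
    thus ?thesis using Nil by simp
  next
    case (Cons i u)
    then obtain j v where vs: "vs = j # v" using lw by (cases vs) auto
    note ru = rw_cons[OF less.prems(1)[unfolded Cons]]
    note rv = rw_cons[OF less.prems(2)[unfolded vs]]
    have lu: "length u < length ws" using Cons by simp
    have lv: "length v < length ws" using vs lw by simp
    have IH': "prod_list (map T a) = prod_list (map T b)" if "length a < length ws" "reduced_word r w' a" "reduced_word r w' b" for a b w'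
      using IH that by blast
    have braid_case: "T i' * prod_list (map T u') = T j' * prod_list (map T v')"
      if ji: "j' = Suc i'" and ru': "reduced_word r w (i' # u')" and rv': "reduced_word r w (j' # v')" for i' j' u' v'
    proof -
      note a = rw_cons[OF ru'] and b = rw_cons[OF rv']
      have lu': "length u' < length ws" "length v' < length ws"
        using ru' rv' lw by (auto simp: reduced_word_def)
      define w1 where "w1 = simple_trans i' \<circ> w"
      define w2 where "w2 = simple_trans j' \<circ> w1"
      define w3 where "w3 = simple_trans i' \<circ> w2"
      have p1: "w1 permutes {1..r}" unfolding w1_def using permutes_compose[OF w st_permutes[OF a(3,4)]] .
      have p2: "w2 permutes {1..r}" unfolding w2_def using permutes_compose[OF p1 st_permutes[OF b(3,4)]] .
      have d1: "inv w1 (Suc j') < inv w1 j'" unfolding w1_def inv_st_comp[OF w a(3,4)]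
        using a(2) b(2) ji by (simp add: st_apply)
      have L1: "Suc (perm_length r w2) = perm_length r w1"
        unfolding w2_def using len_left(2)[OF p1 b(3,4) d1] .
      have d2: "inv w2 (Suc i') < inv w2 i'" unfolding w2_def w1_def
        using inv_st_comp[OF p1 b(3,4)] inv_st_comp[OF w a(3,4)] b(2) ji
        by (simp add: st_apply w1_def)
      have L2: "Suc (perm_length r w3) = perm_length r w2"
        unfolding w3_def using len_left(2)[OF p2 a(3,4) d2] .
      have L0: "Suc (perm_length r w1) = perm_length r w" unfolding w1_def using len_left(2)[OF w a(3,4) a(2)] .
      have p3: "w3 permutes {1..r}" unfolding w3_def using permutes_compose[OF p2 st_permutes[OF a(3,4)]] .
      obtain u3 where u3: "reduced_word r w3 u3" using reduced_exists[OF p3] by blast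
      have wu3: "wp u3 = w3" using rw_wp[OF u3] .
      have su3: "set u3 \<subseteq> {1..<r}" "length u3 = perm_length r w3" using u3 by (auto simp: reduced_word_def)
      have r1: "reduced_word r w1 (j' # i' # u3)"
        unfolding reduced_word_def wp_def[symmetric] using su3 a(3,4) b(3,4) L1 L2 wu3
        by (auto simp: fun_eq_iff w3_def w2_def w1_def)
      have lsw: "perm_length r (simple_trans j' \<circ> w) = perm_length r w1"
        using rv' ru' lw b(1) a(1) unfolding reduced_word_def w1_def by auto
      have r2: "reduced_word r (simple_trans j' \<circ> w) (i' # j' # u3)"
        unfolding reduced_word_def wp_def[symmetric] using su3 a(3,4) b(3,4) L1 L2 wu3 lsw ji
        by (auto simp: fun_eq_iff w3_def w2_def w1_def) (metis st_braid_pt st_involutive(2))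
      have e1: "prod_list (map T u') = T j' * (T i' * prod_list (map T u3))"
        using IH'[OF lu'(1) a(1)[folded w1_def] r1] by simp
      have e2: "prod_list (map T v') = T i' * (T j' * prod_list (map T u3))"
        using IH'[OF lu'(2) b(1) r2] by simp
      have "T i' * T j' * T i' = T j' * T i' * T j'" using braid[of i'] a(3) b(4) ji by simp
      thus ?thesis unfolding e1 e2 by (simp add: mult.assoc[symmetric])
    qed
    consider "i = j" | "Suc i < j \<or> Suc j < i" | "j = Suc i" | "i = Suc j" by linarith
    thus ?thesis
    proof cases
      case 1
      thus ?thesis using IH'[OF lu ru(1)] rv(1) Cons vs by simp
    next
      case 2
      define w1 where "w1 = simple_trans i \<circ> w"
      define w2 where "w2 = simple_trans j \<circ> w1"
      have p1: "w1 permutes {1..r}" unfolding w1_def using permutes_compose[OF w st_permutes[OF ru(3,4)]] .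
      have d1: "inv w1 (Suc j) < inv w1 j" unfolding w1_def inv_st_comp[OF w ru(3,4)]
        using rv(2) 2 by (auto simp: st_apply)
      have L1: "Suc (perm_length r w2) = perm_length r w1"
        unfolding w2_def using len_left(2)[OF p1 rv(3,4) d1] .
      have p2: "w2 permutes {1..r}" unfolding w2_def using permutes_compose[OF p1 st_permutes[OF rv(3,4)]] .
      obtain u2 where u2: "reduced_word r w2 u2" using reduced_exists[OF p2] by blast
      have wu2: "wp u2 = w2" using rw_wp[OF u2] .
      have su2: "set u2 \<subseteq> {1..<r}" "length u2 = perm_length r w2" using u2 by (auto simp: reduced_word_def)
      have r1: "reduced_word r w1 (j # u2)"
        unfolding reduced_word_def wp_def[symmetric] using su2 rv(3,4) L1 wu2
        by (auto simp: fun_eq_iff w2_def w1_def)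
      have lsw: "perm_length r (simple_trans j \<circ> w) = perm_length r w1"
        using less.prems ru(1) rv(1) Cons vs unfolding reduced_word_def w1_def by auto
      have r2: "reduced_word r (simple_trans j \<circ> w) (i # u2)"
        unfolding reduced_word_def wp_def[symmetric] using su2 ru(3,4) L1 wu2 lsw 2
        by (auto simp: fun_eq_iff w2_def w1_def st_comm_pt)
      have e1: "prod_list (map T u) = T j * prod_list (map T u2)"
        using IH'[OF lu ru(1)[folded w1_def] r1] by simp
      have e2: "prod_list (map T v) = T i * prod_list (map T u2)"
        using IH'[OF lv rv(1) r2] by simp
      have "T i * T j = T j * T i" using comm[OF ru(3,4) rv(3,4) 2] .
      thus ?thesis unfolding Cons vs using e1 e2 by (simp add: mult.assoc[symmetric])
    next
      case 3
      show ?thesis using braid_case[OF 3 less.prems(1)[unfolded Cons] less.prems(2)[unfolded vs]] Cons vs by simp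
    next
      case 4
      show ?thesis using braid_case[OF 4 less.prems(2)[unfolded vs] less.prems(1)[unfolded Cons]] Cons vs by simp
    qed
  qed
qed

definition dd :: "nat \<Rightarrow> nat \<Rightarrow> nat \<Rightarrow> nat" where
  "dd R k = wp (rev [k..<R])"

lemma dd_closed:
  assumes "k \<le> R"
  shows "dd R k x = (if x < k \<or> R < x then x else if x = k then R else x - 1)"
  using assms
proof (induction "R - k" arbitrary: k x)
  case 0
  hence "k = R" by simp
  thus ?case by (simp add: dd_def)
next
  case (Suc d)
  hence kR: "k < R" by simp
  have "[k..<R] = k # [Suc k..<R]" using kR by (simp add: upt_rec)
  hence "dd R k = dd R (Suc k) \<circ> simple_trans k" by (simp add: dd_def wp_append)
  moreover have "\<And>y. dd R (Suc k) y = (if y < Suc k \<or> R < y then y else if y = Suc k then R else y - 1)"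
    using Suc kR by simp
  ultimately show ?case using kR by (auto simp: st_apply)
qed

lemma dd_permutes: "1 \<le> k \<Longrightarrow> dd R k permutes {1..R}"
  unfolding dd_def by (rule wp_permutes) auto

lemma Inv_Suc_eq:
  assumes w: "w permutes {1..n}"
  shows "perm_length (Suc n) w = perm_length n w"
proof -
  have "Inv (Suc n) w = Inv n w"
  proof (rule set_eqI, clarify)
    fix a b
    show "((a, b) \<in> Inv (Suc n) w) = ((a, b) \<in> Inv n w)"
    proof (cases "b = Suc n")
      case True
      have "w b = Suc n" using True permutes_not_in[OF w] by simp
      moreover have "a \<le> n \<Longrightarrow> 1 \<le> a \<Longrightarrow> w a \<le> n" using permutes_in_image[OF w, of a] by simp
      ultimately show ?thesis using True by (auto simp: Inv_def)
    next
      case False thus ?thesis by (auto simp: Inv_def)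
    qed
  qed
  thus ?thesis by (simp add: pl_Inv)
qed

lemma len_dd:
  assumes w: "w permutes {1..n}" and k: "1 \<le> k" "k \<le> Suc n"
  shows "perm_length (Suc n) (w \<circ> dd (Suc n) k) = perm_length n w + (Suc n - k)"
  using k
proof (induction "Suc n - k" arbitrary: k)
  case 0
  hence "k = Suc n" by simp
  thus ?case using Inv_Suc_eq[OF w] by (simp add: dd_def)
next
  case (Suc d)
  hence kn: "k \<le> n" by simp
  have "[k..<Suc n] = k # [Suc k..<Suc n]" using kn by (simp add: upt_rec)
  hence e: "dd (Suc n) k = dd (Suc n) (Suc k) \<circ> simple_trans k" by (simp add: dd_def wp_append)
  have w': "w permutes {1..Suc n}" using w by (rule permutes_subset) auto
  have g: "w \<circ> dd (Suc n) (Suc k) permutes {1..Suc n}"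
    using permutes_compose[OF dd_permutes w'] by simp
  have "(w \<circ> dd (Suc n) (Suc k)) k = w k" using dd_closed[of "Suc k" "Suc n" k] kn by simp
  moreover have "(w \<circ> dd (Suc n) (Suc k)) (Suc k) = Suc n"
    using dd_closed[of "Suc k" "Suc n" "Suc k"] kn permutes_not_in[OF w] by simp
  moreover have "w k \<le> n" using permutes_in_image[OF w, of k] Suc.prems kn by simp
  ultimately have "perm_length (Suc n) (w \<circ> dd (Suc n) (Suc k) \<circ> simple_trans k) =
     Suc (perm_length (Suc n) (w \<circ> dd (Suc n) (Suc k)))"
    using len_right(1)[OF g Suc.prems(1)] kn by simp
  moreover have "perm_length (Suc n) (w \<circ> dd (Suc n) (Suc k)) = perm_length n w + (Suc n - Suc k)"
    using Suc kn by simp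
  ultimately show ?case using e kn Suc.hyps(2) by (simp add: comp_assoc)
qed

lemma sum_decomp:
  fixes F :: "(nat \<Rightarrow> nat) \<Rightarrow> 'a::comm_monoid_add"
  shows "(\<Sum>w\<in>{w. w permutes {1..Suc n}}. F w) =
     (\<Sum>w'\<in>{w. w permutes {1..n}}. \<Sum>k\<in>{1..Suc n}. F (w' \<circ> dd (Suc n) k))"
proof -
  define A where "A = {w. w permutes {1..n}}"
  define h :: "(nat \<Rightarrow> nat) \<times> nat \<Rightarrow> nat \<Rightarrow> nat" where "h = (\<lambda>(w', k). w' \<circ> dd (Suc n) k)"
  have inj: "inj_on h (A \<times> {1..Suc n})"
  proof (rule inj_onI, clarify)
    fix w' k v' m
    assume a: "w' \<in> A" "k \<in> {1..Suc n}" "v' \<in> A" "m \<in> {1..Suc n}" and e: "h (w', k) = h (v', m)"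
    have w': "w' permutes {1..n}" and v': "v' permutes {1..n}" using a by (auto simp: A_def)
    have "h (w', k) k = Suc n"
      using dd_closed[of k "Suc n" k] a permutes_not_in[OF w'] by (simp add: h_def)
    hence hv: "v' (dd (Suc n) m k) = Suc n" using fun_cong[OF e, of k] by (simp add: h_def)
    have "dd (Suc n) m k = Suc n"
    proof (cases "dd (Suc n) m k \<in> {1..n}")
      case True
      hence "v' (dd (Suc n) m k) \<in> {1..n}" using permutes_in_image[OF v'] by simp
      thus ?thesis using hv by simp
    next
      case False thus ?thesis using hv permutes_not_in[OF v'] by simp
    qed
    hence km: "k = m" using dd_closed[of m "Suc n" k] a by (auto split: if_splits)
    have d: "dd (Suc n) k permutes {1..Suc n}" using a by (intro dd_permutes) auto
    have "w' = v'"
    proof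
      fix x
      have "w' (dd (Suc n) k (inv (dd (Suc n) k) x)) = v' (dd (Suc n) k (inv (dd (Suc n) k) x))"
      proof -
        have ee: "w' \<circ> dd (Suc n) k = v' \<circ> dd (Suc n) k" using e km by (simp add: h_def)
        show ?thesis using ee by (metis comp_apply)
      qed
      thus "w' x = v' x" using permutes_inverses(1)[OF d] by simp
    qed
    thus "w' = v' \<and> k = m" using km by simp
  qed
  have sub: "h ` (A \<times> {1..Suc n}) \<subseteq> {w. w permutes {1..Suc n}}"
  proof clarify
    fix w' k assume "w' \<in> A" "k \<in> {1..Suc n}"
    hence w': "w' permutes {1..Suc n}" and k: "1 \<le> k" using permutes_subset[of w' "{1..n}"]
      by (auto simp: A_def)
    show "h (w', k) permutes {1..Suc n}" using permutes_compose[OF dd_permutes[OF k] w'] by (simp add: h_def)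
  qed
  have "card (h ` (A \<times> {1..Suc n})) = card A * Suc n" using card_image[OF inj] by (simp add: card_cartesian_product)
  also have "\<dots> = fact (Suc n)" unfolding A_def using card_permutations[of "{1..n}" n] by simp
  also have "\<dots> = card {w. w permutes {1..Suc n}}" using card_permutations[of "{1..Suc n}" "Suc n"] by simp
  finally have img: "h ` (A \<times> {1..Suc n}) = {w. w permutes {1..Suc n}}"
    using card_subset_eq[OF _ sub] finite_permutations[of "{1..Suc n}"] by simp
  have "(\<Sum>w\<in>{w. w permutes {1..Suc n}}. F w) = (\<Sum>p\<in>A \<times> {1..Suc n}. F (h p))"
    unfolding img[symmetric] using sum.reindex[OF inj] by simp
  also have "\<dots> = (\<Sum>w'\<in>A. \<Sum>k\<in>{1..Suc n}. F (h (w', k)))"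
    unfolding sum.cartesian_product by (rule sum.cong) auto
  finally show ?thesis by (simp add: A_def h_def)
qed

definition braid_rel :: "nat \<Rightarrow> (nat \<Rightarrow> 'a::monoid_mult) \<Rightarrow> bool" where
  "braid_rel r T \<longleftrightarrow>
    (\<forall>i j. 1 \<le> i \<longrightarrow> i < r \<longrightarrow> 1 \<le> j \<longrightarrow> j < r \<longrightarrow> (Suc i < j \<or> Suc j < i) \<longrightarrow> T i * T j = T j * T i) \<and>
    (\<forall>i. 1 \<le> i \<longrightarrow> Suc i < r \<longrightarrow> T i * T (Suc i) * T i = T (Suc i) * T i * T (Suc i))"

lemma braid_rel_mono: "braid_rel (Suc n) T \<Longrightarrow> braid_rel n T"
  unfolding braid_rel_def by auto

lemma Tw_eq:
  assumes br: "braid_rel r T" and ws: "reduced_word r w ws"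
  shows "Tw r T w = prod_list (map T ws)"
proof -
  have ex: "reduced_word r w (SOME ws. reduced_word r w ws)" using ws by (rule someI)
  show ?thesis unfolding Tw_def
    by (rule matsumoto[OF _ _ ex ws]) (use br in \<open>auto simp: braid_rel_def\<close>)
qed

lemma Tw_decomp:
  assumes br: "braid_rel (Suc n) T" and w: "w permutes {1..n}" and k: "1 \<le> k" "k \<le> Suc n"
  shows "Tw (Suc n) T (w \<circ> dd (Suc n) k) = Tw n T w * prod_list (map T (rev [k..<Suc n]))"
proof -
  obtain ws where ws: "reduced_word n w ws" using reduced_exists[OF w] by blast
  have "reduced_word (Suc n) (w \<circ> dd (Suc n) k) (ws @ rev [k..<Suc n])"
    using ws k len_dd[OF w k]
    by (auto simp: reduced_word_def wp_def[symmetric] wp_append dd_def)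
  hence "Tw (Suc n) T (w \<circ> dd (Suc n) k) = prod_list (map T (ws @ rev [k..<Suc n]))"
    by (rule Tw_eq[OF br])
  also have "\<dots> = Tw n T w * prod_list (map T (rev [k..<Suc n]))"
    using Tw_eq[OF braid_rel_mono[OF br] ws] by simp
  finally show ?thesis .
qed

definition PP :: "(nat \<Rightarrow> 'a::monoid_mult) \<Rightarrow> nat \<Rightarrow> nat \<Rightarrow> 'a" where
  "PP T m k = prod_list (map T (rev [k..<m]))"

lemma x_sym_Suc:
  fixes T :: "nat \<Rightarrow> 'a::ring_1"
  assumes br: "braid_rel (Suc n) T"
  shows "x_sym (Suc n) T = x_sym n T * (\<Sum>k\<in>{1..Suc n}. PP T (Suc n) k)"
proof -
  have "x_sym (Suc n) T = (\<Sum>w'\<in>{w. w permutes {1..n}}. \<Sum>k\<in>{1..Suc n}. Tw (Suc n) T (w' \<circ> dd (Suc n) k))"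
    unfolding x_sym_def by (rule sum_decomp)
  also have "\<dots> = (\<Sum>w'\<in>{w. w permutes {1..n}}. \<Sum>k\<in>{1..Suc n}. Tw n T w' * PP T (Suc n) k)"
    by (intro sum.cong refl) (simp add: Tw_decomp[OF br] PP_def)
  also have "\<dots> = x_sym n T * (\<Sum>k\<in>{1..Suc n}. PP T (Suc n) k)"
    unfolding x_sym_def sum_distrib_right by (simp only: sum_distrib_left)
  finally show ?thesis .
qed

lemma central_pow: "(\<And>x. a * x = x * a) \<Longrightarrow> (a::'a::monoid_mult) ^ m * x = x * a ^ m"
  by (induction m) (simp_all add: mult.assoc[symmetric], metis mult.assoc)

lemma y_sym_Suc:
  fixes T :: "nat \<Rightarrow> 'a::ring_1"
  assumes br: "braid_rel (Suc n) T" and ca: "\<And>x. a * x = x * a"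
  shows "y_sym (Suc n) a T = y_sym n a T * (\<Sum>k\<in>{1..Suc n}. (- a) ^ (Suc n - k) * PP T (Suc n) k)"
proof -
  have cb: "\<And>x. (- a) * x = x * (- a)" using ca by simp
  have "y_sym (Suc n) a T = (\<Sum>w'\<in>{w. w permutes {1..n}}. \<Sum>k\<in>{1..Suc n}.
      (- a) ^ perm_length (Suc n) (w' \<circ> dd (Suc n) k) * Tw (Suc n) T (w' \<circ> dd (Suc n) k))"
    unfolding y_sym_def by (rule sum_decomp)
  also have "\<dots> = (\<Sum>w'\<in>{w. w permutes {1..n}}. \<Sum>k\<in>{1..Suc n}.
      ((- a) ^ perm_length n w' * Tw n T w') * ((- a) ^ (Suc n - k) * PP T (Suc n) k))"
  proof (intro sum.cong refl)
    fix w' k assume "w' \<in> {w. w permutes {1..n}}" "k \<in> {1..Suc n}"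
    hence w: "w' permutes {1..n}" and k: "1 \<le> k" "k \<le> Suc n" by auto
    have "(- a) ^ perm_length (Suc n) (w' \<circ> dd (Suc n) k) * Tw (Suc n) T (w' \<circ> dd (Suc n) k)
       = (- a) ^ perm_length n w' * ((- a) ^ (Suc n - k) * Tw n T w') * PP T (Suc n) k"
      by (simp add: len_dd[OF w k] Tw_decomp[OF br w k] PP_def power_add mult.assoc)
    also have "\<dots> = (- a) ^ perm_length n w' * (Tw n T w' * (- a) ^ (Suc n - k)) * PP T (Suc n) k"
      using central_pow[OF cb] by simp
    finally show "(- a) ^ perm_length (Suc n) (w' \<circ> dd (Suc n) k) * Tw (Suc n) T (w' \<circ> dd (Suc n) k) =
      ((- a) ^ perm_length n w' * Tw n T w') * ((- a) ^ (Suc n - k) * PP T (Suc n) k)"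
      by (simp add: mult.assoc)
  qed
  also have "\<dots> = y_sym n a T * (\<Sum>k\<in>{1..Suc n}. (- a) ^ (Suc n - k) * PP T (Suc n) k)"
    unfolding y_sym_def sum_distrib_right by (simp only: sum_distrib_left)
  finally show ?thesis .
qed

lemma perms0: "{w. w permutes {1..(0::nat)}} = {id}"
  by auto

lemma Tw0: "Tw 0 T id = 1"
proof -
  have "reduced_word 0 id []" by (simp add: reduced_word_def)
  thus ?thesis using Tw_eq[of 0 T id "[]"] by (simp add: braid_rel_def)
qed

lemma x_sym0: "x_sym 0 (T :: nat \<Rightarrow> 'a::ring_1) = 1"
  unfolding x_sym_def perms0 using Tw0 by simp

lemma y_sym0: "y_sym 0 a (T :: nat \<Rightarrow> 'a::ring_1) = 1"
  unfolding y_sym_def perms0 using Tw0 by simp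




lemma pair_swap:
  fixes f :: "nat \<Rightarrow> nat \<Rightarrow> 'a::comm_monoid_add"
  shows "(\<Sum>k\<in>{1..<N}. \<Sum>j\<in>{1..<k}. f j k) = (\<Sum>j\<in>{1..<N}. \<Sum>l\<in>{Suc j..<N}. f j l)"
proof (induction N)
  case 0 thus ?case by simp
next
  case (Suc N)
  show ?case
  proof (cases "N = 0")
    case True thus ?thesis by simp
  next
    case False
    have "(\<Sum>k\<in>{1..<Suc N}. \<Sum>j\<in>{1..<k}. f j k) = (\<Sum>k\<in>{1..<N}. \<Sum>j\<in>{1..<k}. f j k) + (\<Sum>j\<in>{1..<N}. f j N)"
      using False by simp
    also have "\<dots> = (\<Sum>j\<in>{1..<N}. (\<Sum>l\<in>{Suc j..<N}. f j l) + f j N)"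
      using Suc.IH by (simp add: sum.distrib)
    also have "\<dots> = (\<Sum>j\<in>{1..<N}. \<Sum>l\<in>{Suc j..<Suc N}. f j l)"
      by (intro sum.cong refl) simp
    also have "\<dots> = (\<Sum>j\<in>{1..<Suc N}. \<Sum>l\<in>{Suc j..<Suc N}. f j l)"
      using False by simp
    finally show ?thesis .
  qed
qed

lemma geom_tel:
  fixes Q :: "'a::ring_1"
  shows "1 \<le> k \<Longrightarrow> k \<le> Suc m \<Longrightarrow> (\<Sum>j\<in>{1..<k}. (Q - 1) * Q ^ (m - j)) = Q ^ m - Q ^ (Suc m - k)"
proof (induction k)
  case 0 thus ?case by simp
next
  case (Suc k)
  show ?case
  proof (cases "k = 0")
    case True thus ?thesis by simp
  next
    case False
    hence km: "k \<le> m" using Suc.prems by simp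
    have "(\<Sum>j\<in>{1..<Suc k}. (Q - 1) * Q ^ (m - j)) = Q ^ m - Q ^ (Suc m - k) + (Q - 1) * Q ^ (m - k)"
      using False Suc by simp
    also have "Q ^ (Suc m - k) = Q * Q ^ (m - k)" using km by (simp add: Suc_diff_le)
    finally show ?thesis by (simp add: algebra_simps)
  qed
qed

lemma pow_comm: "(Q::'a::ring_1) ^ n * (Q - 1) = (Q - 1) * Q ^ n"
  by (simp add: algebra_simps power_commutes)

lemma gen_x_k:
  fixes Q :: "'a::ring_1" and W :: "nat \<Rightarrow> nat \<Rightarrow> 'a"
  assumes k: "1 \<le> k" "k \<le> Suc m"
  shows "(\<Sum>j\<in>{1..<k}. Q^(m-j) * W k j) + (\<Sum>j\<in>{k..<Suc m}. Q^(m-j) * (W k (Suc j) + (Q-1) * Q^(j-k) * (W (Suc j) k - W (Suc j) (Suc j)))) + Q^m * W k k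
     = (\<Sum>a\<in>{1..<Suc (Suc m)}. Q^(Suc m - a) * W k a)
       + (Q - 1) * ((\<Sum>j\<in>{1..<k}. Q^(m-j) * (W k k - W k j)) - (\<Sum>l\<in>{Suc k..<Suc (Suc m)}. Q^(m-k) * (W l l - W l k)))"
proof -
  define S where "S = (\<Sum>j\<in>{1..<k}. (Q - 1) * Q^(m-j) * W k j)"
  define S2 where "S2 = (\<Sum>a\<in>{Suc k..<Suc (Suc m)}. Q^(Suc m - a) * W k a)"
  define R1 where "R1 = (\<Sum>a\<in>{1..<k}. Q^(Suc m - a) * W k a)"
  define B where "B = (\<Sum>l\<in>{Suc k..<Suc (Suc m)}. Q^(m-k) * (W l l - W l k))"
  have s1: "(\<Sum>j\<in>{k..<Suc m}. Q^(m-j) * (W k (Suc j) + (Q-1) * Q^(j-k) * (W (Suc j) k - W (Suc j) (Suc j))))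
      = (\<Sum>j\<in>{k..<Suc m}. Q^(m-j) * W k (Suc j)) + (\<Sum>j\<in>{k..<Suc m}. (Q-1) * Q^(m-k) * (W (Suc j) k - W (Suc j) (Suc j)))"
  proof -
    have "\<And>j. j \<in> {k..<Suc m} \<Longrightarrow> Q^(m-j) * ((Q-1) * Q^(j-k) * (W (Suc j) k - W (Suc j) (Suc j)))
         = (Q-1) * Q^(m-k) * (W (Suc j) k - W (Suc j) (Suc j))"
    proof -
      fix j assume "j \<in> {k..<Suc m}"
      hence e: "m - k = (m - j) + (j - k)" by auto
      have "Q^(m-j) * ((Q-1) * Q^(j-k) * (W (Suc j) k - W (Suc j) (Suc j)))
          = (Q^(m-j) * (Q-1)) * Q^(j-k) * (W (Suc j) k - W (Suc j) (Suc j))" by (simp add: mult.assoc)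
      also have "\<dots> = (Q-1) * (Q^(m-j) * Q^(j-k)) * (W (Suc j) k - W (Suc j) (Suc j))"
        by (simp add: pow_comm mult.assoc)
      finally show "Q^(m-j) * ((Q-1) * Q^(j-k) * (W (Suc j) k - W (Suc j) (Suc j)))
         = (Q-1) * Q^(m-k) * (W (Suc j) k - W (Suc j) (Suc j))" by (simp add: e power_add)
    qed
    thus ?thesis by (simp add: distrib_left sum.distrib)
  qed
  have s2: "(\<Sum>j\<in>{k..<Suc m}. Q^(m-j) * W k (Suc j)) = S2"
    unfolding S2_def sum.shift_bounds_Suc_ivl by simp
  have s3: "(\<Sum>j\<in>{k..<Suc m}. (Q-1) * Q^(m-k) * (W (Suc j) k - W (Suc j) (Suc j))) = - ((Q - 1) * B)"
  proof -
    have "(\<Sum>j\<in>{k..<Suc m}. (Q-1) * Q^(m-k) * (W (Suc j) k - W (Suc j) (Suc j)))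
       = (\<Sum>l\<in>{Suc k..<Suc (Suc m)}. (Q-1) * Q^(m-k) * (W l k - W l l))"
      unfolding sum.shift_bounds_Suc_ivl by simp
    also have "\<dots> = (\<Sum>l\<in>{Suc k..<Suc (Suc m)}. - ((Q-1) * (Q^(m-k) * (W l l - W l k))))"
      by (intro sum.cong refl) (simp add: algebra_simps)
    also have "\<dots> = - ((Q - 1) * B)" unfolding B_def sum_distrib_left sum_negf ..
    finally show ?thesis .
  qed
  have s4: "(\<Sum>a\<in>{1..<Suc (Suc m)}. Q^(Suc m - a) * W k a) = R1 + Q^(Suc m - k) * W k k + S2"
  proof -
    have "(\<Sum>a\<in>{1..<Suc (Suc m)}. Q^(Suc m - a) * W k a) = R1 + (\<Sum>a\<in>{k..<Suc (Suc m)}. Q^(Suc m - a) * W k a)"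
      unfolding R1_def by (rule sum.atLeastLessThan_concat[symmetric]) (use k in auto)
    also have "(\<Sum>a\<in>{k..<Suc (Suc m)}. Q^(Suc m - a) * W k a) = Q^(Suc m - k) * W k k + S2"
      unfolding S2_def using sum.atLeast_Suc_lessThan[of k "Suc (Suc m)" "\<lambda>a. Q^(Suc m - a) * W k a"] k
      by (simp del: sum.atLeast_Suc_lessThan_Suc_shift)
    finally show ?thesis by (simp add: add.assoc)
  qed
  have s5: "(\<Sum>j\<in>{1..<k}. Q^(m-j) * W k j) = R1 - S"
  proof -
    have "\<And>j. j \<in> {1..<k} \<Longrightarrow> Q^(m-j) * W k j = Q^(Suc m - j) * W k j - (Q - 1) * Q^(m-j) * W k j"
    proof -
      fix j assume "j \<in> {1..<k}"
      hence "Suc m - j = Suc (m - j)" using k by auto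
      thus "Q^(m-j) * W k j = Q^(Suc m - j) * W k j - (Q - 1) * Q^(m-j) * W k j"
        by (simp add: algebra_simps)
    qed
    hence "(\<Sum>j\<in>{1..<k}. Q^(m-j) * W k j) = (\<Sum>j\<in>{1..<k}. Q^(Suc m - j) * W k j - (Q - 1) * Q^(m-j) * W k j)"
      by (rule sum.cong[OF refl])
    thus ?thesis unfolding R1_def S_def by (simp add: sum_subtractf)
  qed
  have s6: "(Q - 1) * (\<Sum>j\<in>{1..<k}. Q^(m-j) * (W k k - W k j)) = (Q^m - Q^(Suc m - k)) * W k k - S"
  proof -
    have "(Q - 1) * (\<Sum>j\<in>{1..<k}. Q^(m-j) * (W k k - W k j))
       = (\<Sum>j\<in>{1..<k}. (Q - 1) * Q^(m-j)) * W k k - S"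
      unfolding S_def sum_distrib_left sum_distrib_right
      by (simp add: sum_subtractf[symmetric] algebra_simps)
    thus ?thesis using geom_tel[OF k, where Q=Q] by simp
  qed
  show ?thesis
    unfolding s1 s2 s3 s4 s5 B_def[symmetric] using s6
    by (simp add: algebra_simps)
qed

lemma gen_x:
  fixes Q :: "'a::ring_1" and W :: "nat \<Rightarrow> nat \<Rightarrow> 'a"
  shows "(\<Sum>k\<in>{1..<Suc (Suc m)}. (\<Sum>j\<in>{1..<k}. Q^(m-j) * W k j) + (\<Sum>j\<in>{k..<Suc m}. Q^(m-j) * (W k (Suc j) + (Q-1) * Q^(j-k) * (W (Suc j) k - W (Suc j) (Suc j)))) + Q^m * W k k)
     = (\<Sum>k\<in>{1..<Suc (Suc m)}. \<Sum>a\<in>{1..<Suc (Suc m)}. Q^(Suc m - a) * W k a)"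
proof -
  define A where "A k = (\<Sum>j\<in>{1..<k}. Q^(m-j) * (W k k - W k j))" for k
  define B where "B k = (\<Sum>l\<in>{Suc k..<Suc (Suc m)}. Q^(m-k) * (W l l - W l k))" for k
  have "(\<Sum>k\<in>{1..<Suc (Suc m)}. (\<Sum>j\<in>{1..<k}. Q^(m-j) * W k j) + (\<Sum>j\<in>{k..<Suc m}. Q^(m-j) * (W k (Suc j) + (Q-1) * Q^(j-k) * (W (Suc j) k - W (Suc j) (Suc j)))) + Q^m * W k k)
     = (\<Sum>k\<in>{1..<Suc (Suc m)}. (\<Sum>a\<in>{1..<Suc (Suc m)}. Q^(Suc m - a) * W k a) + (Q - 1) * (A k - B k))"
    unfolding A_def B_def by (intro sum.cong refl gen_x_k) auto
  also have "\<dots> = (\<Sum>k\<in>{1..<Suc (Suc m)}. \<Sum>a\<in>{1..<Suc (Suc m)}. Q^(Suc m - a) * W k a) + (Q - 1) * (sum A {1..<Suc (Suc m)} - sum B {1..<Suc (Suc m)})"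
    by (simp add: sum.distrib sum_distrib_left sum_subtractf algebra_simps)
  also have "sum A {1..<Suc (Suc m)} = sum B {1..<Suc (Suc m)}"
    unfolding A_def B_def by (rule pair_swap)
  finally show ?thesis by simp
qed

lemma m1_central: "(-1::'a::ring_1) ^ n * x = x * (-1) ^ n"
  by (cases "even n") simp_all

lemma geom_tel2:
  fixes Q :: "'a::ring_1"
  shows "1 \<le> k \<Longrightarrow> (\<Sum>j\<in>{1..<k}. (Q - 1) * Q ^ (j - 1)) = Q ^ (k - 1) - 1"
proof (induction k)
  case 0 thus ?case by simp
next
  case (Suc k)
  show ?case
  proof (cases "k = 0")
    case True thus ?thesis by simp
  next
    case False
    have "(\<Sum>j\<in>{1..<Suc k}. (Q - 1) * Q ^ (j - 1)) = Q ^ (k - 1) - 1 + (Q - 1) * Q ^ (k - 1)"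
      using False Suc by simp
    also have "Q ^ (Suc k - 1) = Q * Q ^ (k - 1)" using False by (cases k) auto
    ultimately show ?thesis by (simp add: algebra_simps)
  qed
qed

lemma gen_y_k:
  fixes Q :: "'a::ring_1" and W :: "nat \<Rightarrow> nat \<Rightarrow> 'a"
  assumes k: "1 \<le> k" "k \<le> Suc m"
  shows "(\<Sum>j\<in>{1..<k}. Q^j * W k j) + (\<Sum>j\<in>{k..<Suc m}. Q^j * (W k (Suc j) + (Q-1) * (-1)^(j-k) * (W (Suc j) k - W (Suc j) (Suc j)))) + W k k
     = (\<Sum>a\<in>{1..<Suc (Suc m)}. Q^(a - 1) * W k a)
       + (Q - 1) * ((\<Sum>j\<in>{1..<k}. Q^(j-1) * (W k j - W k k)) + (\<Sum>l\<in>{Suc k..<Suc (Suc m)}. (-1)^(l-1-k) * Q^(l-1) * (W l k - W l l)))"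
proof -
  define S where "S = (\<Sum>j\<in>{1..<k}. (Q - 1) * Q^(j-1) * W k j)"
  define S2 where "S2 = (\<Sum>a\<in>{Suc k..<Suc (Suc m)}. Q^(a - 1) * W k a)"
  define R1 where "R1 = (\<Sum>a\<in>{1..<k}. Q^(a - 1) * W k a)"
  define B where "B = (\<Sum>l\<in>{Suc k..<Suc (Suc m)}. (-1)^(l-1-k) * Q^(l-1) * (W l k - W l l))"
  have s1: "(\<Sum>j\<in>{k..<Suc m}. Q^j * (W k (Suc j) + (Q-1) * (-1)^(j-k) * (W (Suc j) k - W (Suc j) (Suc j))))
      = (\<Sum>j\<in>{k..<Suc m}. Q^j * W k (Suc j)) + (\<Sum>j\<in>{k..<Suc m}. (Q-1) * ((-1)^(j-k) * Q^j * (W (Suc j) k - W (Suc j) (Suc j))))"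
  proof -
    have "\<And>j. Q^j * ((Q-1) * (-1)^(j-k) * (W (Suc j) k - W (Suc j) (Suc j)))
         = (Q-1) * ((-1)^(j-k) * Q^j * (W (Suc j) k - W (Suc j) (Suc j)))"
    proof -
      fix j
      have "Q^j * ((Q-1) * (-1)^(j-k) * (W (Suc j) k - W (Suc j) (Suc j)))
          = (Q^j * (Q-1)) * (-1)^(j-k) * (W (Suc j) k - W (Suc j) (Suc j))" by (simp add: mult.assoc)
      also have "\<dots> = (Q-1) * (Q^j * (-1)^(j-k)) * (W (Suc j) k - W (Suc j) (Suc j))"
        by (simp add: pow_comm mult.assoc)
      also have "\<dots> = (Q-1) * ((-1)^(j-k) * Q^j) * (W (Suc j) k - W (Suc j) (Suc j))"
        by (simp add: m1_central)
      finally show "Q^j * ((Q-1) * (-1)^(j-k) * (W (Suc j) k - W (Suc j) (Suc j)))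
         = (Q-1) * ((-1)^(j-k) * Q^j * (W (Suc j) k - W (Suc j) (Suc j)))" by (simp add: mult.assoc)
    qed
    thus ?thesis by (simp add: distrib_left sum.distrib)
  qed
  have s2: "(\<Sum>j\<in>{k..<Suc m}. Q^j * W k (Suc j)) = S2"
    unfolding S2_def sum.shift_bounds_Suc_ivl by simp
  have s3: "(\<Sum>j\<in>{k..<Suc m}. (Q-1) * ((-1)^(j-k) * Q^j * (W (Suc j) k - W (Suc j) (Suc j)))) = (Q - 1) * B"
  proof -
    have "(\<Sum>j\<in>{k..<Suc m}. (Q-1) * ((-1)^(j-k) * Q^j * (W (Suc j) k - W (Suc j) (Suc j))))
       = (\<Sum>l\<in>{Suc k..<Suc (Suc m)}. (Q-1) * ((-1)^(l-1-k) * Q^(l-1) * (W l k - W l l)))"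
      unfolding sum.shift_bounds_Suc_ivl by simp
    thus ?thesis unfolding B_def sum_distrib_left .
  qed
  have s4: "(\<Sum>a\<in>{1..<Suc (Suc m)}. Q^(a - 1) * W k a) = R1 + Q^(k - 1) * W k k + S2"
  proof -
    have "(\<Sum>a\<in>{1..<Suc (Suc m)}. Q^(a - 1) * W k a) = R1 + (\<Sum>a\<in>{k..<Suc (Suc m)}. Q^(a - 1) * W k a)"
      unfolding R1_def by (rule sum.atLeastLessThan_concat[symmetric]) (use k in auto)
    also have "(\<Sum>a\<in>{k..<Suc (Suc m)}. Q^(a - 1) * W k a) = Q^(k - 1) * W k k + S2"
      unfolding S2_def using sum.atLeast_Suc_lessThan[of k "Suc (Suc m)" "\<lambda>a. Q^(a - 1) * W k a"] k
      by (simp del: sum.atLeast_Suc_lessThan_Suc_shift)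
    finally show ?thesis by (simp add: add.assoc)
  qed
  have s5: "(\<Sum>j\<in>{1..<k}. Q^j * W k j) = R1 + S"
  proof -
    have "\<And>j. j \<in> {1..<k} \<Longrightarrow> Q^j * W k j = Q^(j - 1) * W k j + (Q - 1) * Q^(j - 1) * W k j"
    proof -
      fix j assume "j \<in> {1..<k}"
      hence "j = Suc (j - 1)" by auto
      hence "Q^j = Q * Q^(j-1)" by (metis power_Suc)
      thus "Q^j * W k j = Q^(j - 1) * W k j + (Q - 1) * Q^(j - 1) * W k j"
        by (simp add: algebra_simps)
    qed
    hence "(\<Sum>j\<in>{1..<k}. Q^j * W k j) = (\<Sum>j\<in>{1..<k}. Q^(j - 1) * W k j + (Q - 1) * Q^(j - 1) * W k j)"
      by (rule sum.cong[OF refl])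
    thus ?thesis unfolding R1_def S_def by (simp add: sum.distrib)
  qed
  have s6: "(Q - 1) * (\<Sum>j\<in>{1..<k}. Q^(j-1) * (W k j - W k k)) = S - (Q^(k-1) - 1) * W k k"
  proof -
    have "(Q - 1) * (\<Sum>j\<in>{1..<k}. Q^(j-1) * (W k j - W k k))
       = S - (\<Sum>j\<in>{1..<k}. (Q - 1) * Q^(j-1)) * W k k"
      unfolding S_def sum_distrib_left sum_distrib_right
      by (simp add: sum_subtractf[symmetric] algebra_simps)
    thus ?thesis using geom_tel2[OF k(1), where Q=Q] by simp
  qed
  show ?thesis
    unfolding s1 s2 s3 s4 s5 B_def[symmetric] unfolding distrib_left s6
    by (simp add: algebra_simps)
qed

lemma gen_y:
  fixes Q \<beta> :: "'a::ring_1" and W :: "nat \<Rightarrow> nat \<Rightarrow> 'a"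
  assumes bq: "\<beta> * Q = Q * \<beta>"
    and coef: "\<And>j k. 1 \<le> j \<Longrightarrow> j < k \<Longrightarrow> k \<le> Suc m \<Longrightarrow>
        \<beta>^(Suc m - j) * ((-1)^(k-1-j) * Q^(k-1)) = - (\<beta>^(Suc m - k) * Q^(j-1))"
  shows "(\<Sum>k\<in>{1..<Suc (Suc m)}. \<beta>^(Suc m - k) * ((\<Sum>j\<in>{1..<k}. Q^j * W k j) + (\<Sum>j\<in>{k..<Suc m}. Q^j * (W k (Suc j) + (Q-1) * (-1)^(j-k) * (W (Suc j) k - W (Suc j) (Suc j)))) + W k k))
     = (\<Sum>k\<in>{1..<Suc (Suc m)}. \<beta>^(Suc m - k) * (\<Sum>a\<in>{1..<Suc (Suc m)}. Q^(a - 1) * W k a))"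
proof -
  define N where "N = Suc (Suc m)"
  define g where "g j k = \<beta>^(Suc m - k) * (Q^(j-1) * (W k j - W k k))" for j k
  define f where "f k l = \<beta>^(Suc m - k) * ((-1)^(l-1-k) * Q^(l-1) * (W l k - W l l))" for k l
  have bQ: "\<beta>^e * (Q - 1) = (Q - 1) * \<beta>^e" for e
  proof -
    have "\<beta>^e * Q = Q * \<beta>^e"
    proof (induction e)
      case (Suc e)
      have "\<beta>^Suc e * Q = \<beta> * (\<beta>^e * Q)" by (simp add: mult.assoc)
      also have "\<dots> = (\<beta> * Q) * \<beta>^e" by (simp add: Suc mult.assoc)
      also have "\<dots> = Q * \<beta>^Suc e" by (simp add: bq mult.assoc)
      finally show ?case .
    qed simp
    thus ?thesis by (simp add: algebra_simps)
  qed
  have "(\<Sum>k\<in>{1..<N}. \<beta>^(Suc m - k) * ((\<Sum>j\<in>{1..<k}. Q^j * W k j) + (\<Sum>j\<in>{k..<Suc m}. Q^j * (W k (Suc j) + (Q-1) * (-1)^(j-k) * (W (Suc j) k - W (Suc j) (Suc j)))) + W k k))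
     = (\<Sum>k\<in>{1..<N}. \<beta>^(Suc m - k) * (\<Sum>a\<in>{1..<N}. Q^(a - 1) * W k a) + (Q - 1) * ((\<Sum>j\<in>{1..<k}. g j k) + (\<Sum>l\<in>{Suc k..<N}. f k l)))"
  proof (intro sum.cong refl)
    fix k assume "k \<in> {1..<N}"
    hence k: "1 \<le> k" "k \<le> Suc m" by (auto simp: N_def)
    show "\<beta>^(Suc m - k) * ((\<Sum>j\<in>{1..<k}. Q^j * W k j) + (\<Sum>j\<in>{k..<Suc m}. Q^j * (W k (Suc j) + (Q-1) * (-1)^(j-k) * (W (Suc j) k - W (Suc j) (Suc j)))) + W k k)
      = \<beta>^(Suc m - k) * (\<Sum>a\<in>{1..<N}. Q^(a - 1) * W k a) + (Q - 1) * ((\<Sum>j\<in>{1..<k}. g j k) + (\<Sum>l\<in>{Suc k..<N}. f k l))"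
      (is "?L = ?R")
    proof -
      have "?L = \<beta>^(Suc m - k) * ((\<Sum>a\<in>{1..<Suc (Suc m)}. Q^(a - 1) * W k a)
       + (Q - 1) * ((\<Sum>j\<in>{1..<k}. Q^(j-1) * (W k j - W k k)) + (\<Sum>l\<in>{Suc k..<Suc (Suc m)}. (-1)^(l-1-k) * Q^(l-1) * (W l k - W l l))))"
        by (simp only: gen_y_k[OF k])
      also have "\<dots> = \<beta>^(Suc m - k) * (\<Sum>a\<in>{1..<Suc (Suc m)}. Q^(a - 1) * W k a)
       + (\<beta>^(Suc m - k) * (Q - 1)) * ((\<Sum>j\<in>{1..<k}. Q^(j-1) * (W k j - W k k)) + (\<Sum>l\<in>{Suc k..<Suc (Suc m)}. (-1)^(l-1-k) * Q^(l-1) * (W l k - W l l)))"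
        by (simp only: distrib_left mult.assoc)
      also have "\<dots> = \<beta>^(Suc m - k) * (\<Sum>a\<in>{1..<Suc (Suc m)}. Q^(a - 1) * W k a)
       + (Q - 1) * (\<beta>^(Suc m - k) * ((\<Sum>j\<in>{1..<k}. Q^(j-1) * (W k j - W k k)) + (\<Sum>l\<in>{Suc k..<Suc (Suc m)}. (-1)^(l-1-k) * Q^(l-1) * (W l k - W l l))))"
        by (simp only: bQ mult.assoc)
      also have "\<dots> = ?R"
        unfolding N_def g_def f_def distrib_left[of "\<beta>^(Suc m - k)"] sum_distrib_left ..
      finally show ?thesis .
    qed
  qed
  also have "\<dots> = (\<Sum>k\<in>{1..<N}. \<beta>^(Suc m - k) * (\<Sum>a\<in>{1..<N}. Q^(a - 1) * W k a))
      + (Q - 1) * ((\<Sum>k\<in>{1..<N}. \<Sum>j\<in>{1..<k}. g j k) + (\<Sum>k\<in>{1..<N}. \<Sum>l\<in>{Suc k..<N}. f k l))"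
    by (simp only: sum.distrib sum_distrib_left[symmetric] distrib_left)
  also have "(\<Sum>k\<in>{1..<N}. \<Sum>l\<in>{Suc k..<N}. f k l) = (\<Sum>l\<in>{1..<N}. \<Sum>k\<in>{1..<l}. f k l)"
    by (rule pair_swap[symmetric])
  also have "\<dots> = (\<Sum>l\<in>{1..<N}. \<Sum>k\<in>{1..<l}. - g k l)"
  proof (intro sum.cong refl)
    fix l k assume "l \<in> {1..<N}" "k \<in> {1..<l}"
    hence jk: "1 \<le> k" "k < l" "l \<le> Suc m" by (auto simp: N_def)
    have "f k l = (\<beta>^(Suc m - k) * ((-1)^(l-1-k) * Q^(l-1))) * (W l k - W l l)"
      by (simp add: f_def mult.assoc)
    also have "\<dots> = - (\<beta>^(Suc m - l) * Q^(k-1)) * (W l k - W l l)" by (simp only: coef[OF jk])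
    finally show "f k l = - g k l" by (simp add: g_def mult.assoc)
  qed
  finally show ?thesis by (simp add: N_def sum_negf)
qed




locale hc =
  fixes n :: nat and Q :: "'a::ring_1" and T c :: "nat \<Rightarrow> 'a"
  assumes Qc: "\<And>x. Q * x = x * Q"
  and quad: "\<And>i. 1 \<le> i \<Longrightarrow> i < n \<Longrightarrow> T i * T i = (Q - 1) * T i + Q"
  and comm: "\<And>i j. 1 \<le> i \<Longrightarrow> i < n \<Longrightarrow> 1 \<le> j \<Longrightarrow> j < n \<Longrightarrow> Suc i < j \<or> Suc j < i \<Longrightarrow> T i * T j = T j * T i"
  and braid: "\<And>i. 1 \<le> i \<Longrightarrow> Suc i < n \<Longrightarrow> T i * T (Suc i) * T i = T (Suc i) * T i * T (Suc i)"
  and tc: "\<And>i j. 1 \<le> i \<Longrightarrow> i < n \<Longrightarrow> 1 \<le> j \<Longrightarrow> j \<le> n \<Longrightarrow> j \<noteq> i \<Longrightarrow> j \<noteq> Suc i \<Longrightarrow> T i * c j = c j * T i"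
  and tc1: "\<And>i. 1 \<le> i \<Longrightarrow> i < n \<Longrightarrow> T i * c i = c (Suc i) * T i"
  and tc2: "\<And>i. 1 \<le> i \<Longrightarrow> i < n \<Longrightarrow> T i * c (Suc i) = c i * T i - (Q - 1) * (c i - c (Suc i))"
begin

abbreviation "PT ws \<equiv> prod_list (map T ws)"

lemma c_comm_list:
  assumes "1 \<le> a" "a \<le> n" "\<forall>i\<in>set ws. 1 \<le> i \<and> i < n \<and> a \<noteq> i \<and> a \<noteq> Suc i"
  shows "c a * PT ws = PT ws * c a"
  using assms(3)
proof (induction ws)
  case (Cons i ws)
  hence "c a * T i = T i * c a" using tc[of i a] assms(1,2) by simp
  thus ?case using Cons by (simp add: mult.assoc[symmetric]) (simp add: mult.assoc)
qed simp

lemma T_comm_list: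
  assumes "1 \<le> a" "a < n" "\<forall>i\<in>set ws. 1 \<le> i \<and> i < n \<and> (Suc a < i \<or> Suc i < a)"
  shows "T a * PT ws = PT ws * T a"
  using assms(3)
proof (induction ws)
  case (Cons i ws)
  hence "T a * T i = T i * T a" using comm[of a i] assms(1,2) by simp
  thus ?case using Cons by (simp add: mult.assoc[symmetric]) (simp add: mult.assoc)
qed simp

lemma list_comm:
  assumes "\<forall>a\<in>set xs. 1 \<le> a \<and> a < n" "\<forall>i\<in>set ys. 1 \<le> i \<and> i < n"
    "\<forall>a\<in>set xs. \<forall>i\<in>set ys. Suc a < i \<or> Suc i < a"
  shows "PT xs * PT ys = PT ys * PT xs"
  using assms
proof (induction xs)
  case (Cons a xs)
  have "T a * PT ys = PT ys * T a" using Cons.prems by (intro T_comm_list) auto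
  hence "PT (a # xs) * PT ys = T a * (PT ys * PT xs)" using Cons by (simp add: mult.assoc)
  also have "\<dots> = PT ys * PT (a # xs)" using \<open>T a * PT ys = PT ys * T a\<close>
    by (simp add: mult.assoc[symmetric])
  finally show ?case .
qed simp

lemma PP_self[simp]: "PP T m m = 1"
  by (simp add: PP_def)

lemma set_rev_upt: "set (rev [k..<m]) = {k..<m}" by simp

lemma PP_split:
  assumes "k \<le> j" "j < m"
  shows "PP T m k = PP T m (Suc j) * T j * PP T j k"
proof -
  have "[k..<m] = [k..<j] @ [j..<m]" using upt_add_eq_append[of k j "m - j"] assms by simp
  also have "[j..<m] = j # [Suc j..<m]" using assms by (simp add: upt_conv_Cons)
  finally show ?thesis by (simp add: PP_def mult.assoc)
qed

lemma PP_Suc: "k < m \<Longrightarrow> PP T m k = PP T m (Suc k) * T k"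
  using PP_split[of k k m] by simp

lemma cascade:
  assumes "1 \<le> k" "k \<le> j" "j \<le> n"
  shows "c j * PP T j k = PP T j k * c k"
  using assms
proof (induction "j - k" arbitrary: j)
  case 0 thus ?case by simp
next
  case (Suc d)
  define i where "i = j - 1"
  have ij: "j = Suc i" "k \<le> i" "i < n" "1 \<le> i" using Suc unfolding i_def by auto
  have e: "PP T j k = T i * PP T i k" using PP_split[of k i j] ij by simp
  have "c j * T i = T i * c i" using tc1[of i] ij by simp
  moreover have "c i * PP T i k = PP T i k * c k" using Suc ij by simp
  ultimately show ?case unfolding e by (metis mult.assoc)
qed

lemma absorb:
  assumes ab: "\<And>a. 1 \<le> a \<Longrightarrow> a < p \<Longrightarrow> X * T a = \<epsilon> * X" and ec: "\<And>x. \<epsilon> * x = x * \<epsilon>"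
    and ws: "set ws \<subseteq> {1..<p}"
  shows "X * PT ws = \<epsilon> ^ length ws * X"
  using ws
proof (induction ws rule: rev_induct)
  case (snoc a ws)
  have "X * PT (ws @ [a]) = (X * PT ws) * T a" by (simp add: mult.assoc)
  also have "\<dots> = \<epsilon> ^ length ws * (X * T a)" using snoc by (simp add: mult.assoc)
  also have "\<dots> = \<epsilon> ^ length ws * (\<epsilon> * X)" using ab snoc.prems by simp
  finally show ?case by (simp add: mult.assoc[symmetric] power_commutes)
qed simp

lemma absorb_PP:
  assumes ab: "\<And>a. 1 \<le> a \<Longrightarrow> a < p \<Longrightarrow> X * T a = \<epsilon> * X" and ec: "\<And>x. \<epsilon> * x = x * \<epsilon>"
    and "1 \<le> k" "j \<le> p"
  shows "X * PP T j k = \<epsilon> ^ (j - k) * X"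
  unfolding PP_def using absorb[OF ab ec, where ws = "rev [k..<j]"] assms by auto

lemma Qpow_c: "Q ^ e * x = x * Q ^ e"
  by (induction e) (simp_all add: mult.assoc, metis Qc mult.assoc)

lemma Q1_c: "(Q - 1) * x = x * (Q - 1)"
  by (simp add: algebra_simps Qc)

lemma Q1_pull: "x * ((Q - 1) * y) = (Q - 1) * (x * y)"
  by (metis Q1_c mult.assoc)

lemma Qpow_pull: "x * (Q ^ e * y) = Q ^ e * (x * y)"
  by (metis Qpow_c mult.assoc)

lemma F2:
  assumes "1 \<le> j" "j < k" "k \<le> M" "M \<le> n"
  shows "c j * PP T M k = PP T M k * c j"
  unfolding PP_def using assms by (intro c_comm_list) auto

lemma F1:
  assumes "1 \<le> k" "k \<le> M" "M \<le> n"
  shows "c M * PP T M k = PP T M k * c k"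
  using cascade assms by blast

lemma F3:
  assumes ab: "\<And>a. 1 \<le> a \<Longrightarrow> a < p \<Longrightarrow> X * T a = \<epsilon> * X" and ec: "\<And>x. \<epsilon> * x = x * \<epsilon>"
    and pn: "Suc p \<le> n" and k: "1 \<le> k" "k \<le> j" "j < Suc p"
  shows "X * (c j * PP T (Suc p) k) = X * PP T (Suc p) k * c (Suc j)
     + (Q - 1) * (\<epsilon> ^ (j - k) * (X * PP T (Suc p) (Suc j) * (c k - c (Suc j))))"
proof -
  define M where "M = Suc p"
  have e1: "PP T M k = PP T M (Suc j) * T j * PP T j k" using PP_split k unfolding M_def by simp
  have e2: "c j * PP T M (Suc j) = PP T M (Suc j) * c j"
    unfolding PP_def using k pn unfolding M_def by (intro c_comm_list) auto
  have e3: "c j * T j = T j * c (Suc j) + (Q - 1) * (c j - c (Suc j))"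
    using tc2[of j] k pn by simp
  have e4: "c (Suc j) * PP T j k = PP T j k * c (Suc j)"
    unfolding PP_def using k pn by (intro c_comm_list) auto
  have e5: "c j * PP T j k = PP T j k * c k" using cascade k pn by simp
  have e6: "PP T M (Suc j) * PP T j k = PP T j k * PP T M (Suc j)"
    unfolding PP_def using k pn unfolding M_def by (intro list_comm) auto
  have e7: "X * PP T j k = \<epsilon> ^ (j - k) * X" using absorb_PP[OF ab ec] k by simp
  have "c j * PP T M k = PP T M (Suc j) * (c j * T j) * PP T j k"
    unfolding e1 by (simp add: mult.assoc[symmetric] e2)
  also have "\<dots> = PP T M (Suc j) * T j * (c (Suc j) * PP T j k) + PP T M (Suc j) * ((Q - 1) * (c j - c (Suc j))) * PP T j k"
    unfolding e3 by (simp add: algebra_simps)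
  also have "\<dots> = PP T M k * c (Suc j) + (Q - 1) * (PP T M (Suc j) * (c j * PP T j k - c (Suc j) * PP T j k))"
  proof -
    have a: "PP T M (Suc j) * T j * (c (Suc j) * PP T j k) = PP T M k * c (Suc j)"
      unfolding e4 e1 by (simp add: mult.assoc)
    have b: "PP T M (Suc j) * ((Q - 1) * (c j - c (Suc j))) * PP T j k
       = (Q - 1) * (PP T M (Suc j) * (c j * PP T j k - c (Suc j) * PP T j k))"
    proof -
      have d: "(c j - c (Suc j)) * PP T j k = c j * PP T j k - c (Suc j) * PP T j k" by (rule left_diff_distrib)
      show ?thesis by (simp only: mult.assoc Q1_pull d)
    qed
    show ?thesis unfolding a b ..
  qed
  also have "\<dots> = PP T M k * c (Suc j) + (Q - 1) * (PP T M (Suc j) * PP T j k * (c k - c (Suc j)))"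
    unfolding e4 e5 by (simp add: mult.assoc right_diff_distrib)
  finally have "X * (c j * PP T M k) = X * PP T M k * c (Suc j) + (Q - 1) * ((X * PP T M (Suc j) * PP T j k) * (c k - c (Suc j)))"
    by (simp add: distrib_left Q1_pull mult.assoc)
  also have "X * PP T M (Suc j) * PP T j k = \<epsilon> ^ (j - k) * X * PP T M (Suc j)"
    by (simp add: mult.assoc e6) (simp add: mult.assoc[symmetric] e7)
  finally show ?thesis unfolding M_def by (simp add: mult.assoc)
qed

end

lemma hom_0: "central_ring_hom \<phi> \<Longrightarrow> \<phi> 0 = 0"
  unfolding central_ring_hom_def by (metis add_cancel_right_right add_0)
lemma hom_add: "central_ring_hom \<phi> \<Longrightarrow> \<phi> (x + y) = \<phi> x + \<phi> y"
  unfolding central_ring_hom_def by blast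
lemma hom_mult: "central_ring_hom \<phi> \<Longrightarrow> \<phi> (x * y) = \<phi> x * \<phi> y"
  unfolding central_ring_hom_def by blast
lemma hom_1: "central_ring_hom \<phi> \<Longrightarrow> \<phi> 1 = 1"
  unfolding central_ring_hom_def by blast
lemma hom_c: "central_ring_hom \<phi> \<Longrightarrow> \<phi> x * a = a * \<phi> x"
  unfolding central_ring_hom_def by blast
lemma hom_uminus: "central_ring_hom \<phi> \<Longrightarrow> \<phi> (- x) = - \<phi> x"
  using hom_add[of \<phi> x "- x"] hom_0[of \<phi>] by (simp add: eq_neg_iff_add_eq_0 add.commute)
lemma hom_diff: "central_ring_hom \<phi> \<Longrightarrow> \<phi> (x - y) = \<phi> x - \<phi> y"
  using hom_add[of \<phi> x "- y"] hom_uminus[of \<phi> y] by simp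
lemma hom_pow: "central_ring_hom \<phi> \<Longrightarrow> \<phi> (x ^ k) = \<phi> x ^ k"
  by (induction k) (simp_all add: hom_1 hom_mult)
lemma hom_left: "central_ring_hom \<phi> \<Longrightarrow> a * (\<phi> x * b) = \<phi> x * (a * b)"
  by (metis hom_c mult.assoc)
lemmas hom_simps = hom_0 hom_add hom_mult hom_1 hom_uminus hom_diff hom_pow

locale hcp = hc n "\<phi> q" T c for n and \<phi> :: "'r::comm_ring_1 \<Rightarrow> 'a::ring_1" and q T c +
  assumes hom: "central_ring_hom \<phi>"
begin

lemma hc_pair:
  assumes a: "1 \<le> a" "a < M" "M \<le> n"
    and c1: "b * q = e" and c2: "b * (q - 1) + 1 = e * b"
  shows "X * (\<phi> (b ^ (M - a)) * PP T M a) * T a + X * (\<phi> (b ^ (M - Suc a)) * PP T M (Suc a)) * T a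
     = \<phi> e * (X * (\<phi> (b ^ (M - a)) * PP T M a) + X * (\<phi> (b ^ (M - Suc a)) * PP T M (Suc a)))"
proof -
  define t where "t = b ^ (M - Suc a)"
  have bt: "b ^ (M - a) = b * t" unfolding t_def using a by (simp add: Suc_diff_Suc power_Suc[symmetric])
  define V where "V = X * PP T M (Suc a)"
  define U where "U = X * PP T M a"
  have UV: "U = V * T a" unfolding U_def V_def using PP_Suc[of a M] a by (simp add: mult.assoc)
  have TT: "T a * T a = \<phi> (q - 1) * T a + \<phi> q" using quad[of a] a hom by (simp add: hom_diff hom_1)
  have f1: "X * (\<phi> (b ^ (M - a)) * PP T M a) = \<phi> (b * t) * U"
    unfolding U_def bt by (simp add: hom_left[OF hom])
  have f2: "X * (\<phi> (b ^ (M - Suc a)) * PP T M (Suc a)) = \<phi> t * V"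
    unfolding V_def t_def by (simp add: hom_left[OF hom])
  have g1: "\<phi> (b * t) * U * T a = \<phi> (b * t * (q - 1)) * U + \<phi> (b * t * q) * V"
  proof -
    have "\<phi> (b * t) * U * T a = \<phi> (b * t) * (V * (T a * T a))" unfolding UV by (simp add: mult.assoc)
    also have "\<dots> = \<phi> (b * t) * (\<phi> (q - 1) * U + \<phi> q * V)"
    proof -
      have i1: "V * (\<phi> (q - 1) * T a) = \<phi> (q - 1) * (V * T a)" by (metis hom_c[OF hom] mult.assoc)
      have i2: "V * \<phi> q = \<phi> q * V" by (rule hom_c[OF hom, symmetric])
      show ?thesis unfolding TT UV distrib_left i1 i2 ..
    qed
    finally show ?thesis by (simp add: distrib_left mult.assoc[symmetric] hom_mult[OF hom])
  qed
  have g2: "\<phi> t * V * T a = \<phi> t * U" unfolding UV by (simp add: mult.assoc)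
  have k1: "b * t * (q - 1) + t = e * (b * t)"
  proof -
    have "b * t * (q - 1) + t = (b * (q - 1) + 1) * t" by (simp add: algebra_simps)
    thus ?thesis unfolding c2 by (simp add: mult.assoc)
  qed
  have k2: "b * t * q = e * t" using c1[symmetric] by (simp add: mult.commute mult.left_commute)
  have h0: "\<phi> (b * t * (q - 1)) * U + \<phi> (b * t * q) * V + \<phi> t * U
      = \<phi> (b * t * (q - 1) + t) * U + \<phi> (b * t * q) * V"
    by (simp add: hom_add[OF hom] distrib_right)
  have h: "\<phi> (b * t * (q - 1)) * U + \<phi> (b * t * q) * V + \<phi> t * U = \<phi> (e * (b * t)) * U + \<phi> (e * t) * V"
    by (subst h0) (simp only: k1 k2)
  show ?thesis unfolding f1 f2 g1 g2 h
    by (simp add: hom_mult[OF hom] distrib_left mult.assoc)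
qed

lemma braid_move:
  assumes "1 \<le> k" "k < a" "a < M" "M \<le> n"
  shows "PP T M k * T a = T (a - 1) * PP T M k"
proof -
  define i where "i = a - 1"
  have ai: "a = Suc i" "k \<le> i" "1 \<le> i" using assms unfolding i_def by auto
  have e1: "PP T M k = PP T M (Suc a) * T a * (T i * PP T i k)"
    using PP_split[of k a M] PP_split[of k i a] assms ai by simp
  have c1: "PP T i k * T a = T a * PP T i k"
    unfolding PP_def using assms ai by (intro T_comm_list[symmetric]) auto
  have c2: "T i * PP T M (Suc a) = PP T M (Suc a) * T i"
    unfolding PP_def using assms ai by (intro T_comm_list) auto
  have br: "T a * T i * T a = T i * T a * T i" using braid[of i] ai assms by simp
  have "PP T M k * T a = PP T M (Suc a) * (T a * T i * T a) * PP T i k"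
    unfolding e1 by (simp add: mult.assoc c1)
  also have "\<dots> = (T i * PP T M (Suc a)) * T a * T i * PP T i k"
    unfolding br c2 by (simp add: mult.assoc)
  also have "\<dots> = T i * PP T M k" unfolding e1 by (simp add: mult.assoc)
  finally show ?thesis unfolding i_def .
qed

lemma sum_pair:
  assumes "finite S" "a \<in> S" "b \<in> S" "a \<noteq> b"
    "\<And>k. k \<in> S \<Longrightarrow> k \<noteq> a \<Longrightarrow> k \<noteq> b \<Longrightarrow> g k = h k" "g a + g b = h a + h b"
  shows "sum g S = (sum h S :: 'b::comm_monoid_add)"
proof -
  have "sum g S = g a + (g b + sum g (S - {a} - {b}))"
    using assms by (simp add: sum.remove[of S a] sum.remove[of "S - {a}" b])
  also have "sum g (S - {a} - {b}) = sum h (S - {a} - {b})" using assms(5) by (intro sum.cong) auto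
  also have "g a + (g b + sum h (S - {a} - {b})) = h a + (h b + sum h (S - {a} - {b}))"
    using assms(6) by (simp add: add.assoc[symmetric])
  also have "\<dots> = sum h S" using assms by (simp add: sum.remove[of S a] sum.remove[of "S - {a}" b])
  finally show ?thesis .
qed

lemma absorb_step:
  assumes M: "M \<le> n" "M = Suc m"
    and ab: "\<And>a. 1 \<le> a \<Longrightarrow> a < m \<Longrightarrow> X * T a = \<phi> e * X"
    and c1: "b * q = e" and c2: "b * (q - 1) + 1 = e * b"
    and a: "1 \<le> a" "a < M"
  shows "X * (\<Sum>k\<in>{1..M}. \<phi> (b ^ (M - k)) * PP T M k) * T a = \<phi> e * (X * (\<Sum>k\<in>{1..M}. \<phi> (b ^ (M - k)) * PP T M k))"
proof -
  define f where "f k = X * (\<phi> (b ^ (M - k)) * PP T M k)" for k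
  have L: "X * (\<Sum>k\<in>{1..M}. \<phi> (b ^ (M - k)) * PP T M k) * T a = (\<Sum>k\<in>{1..M}. f k * T a)"
    unfolding f_def sum_distrib_left sum_distrib_right ..
  have R: "\<phi> e * (X * (\<Sum>k\<in>{1..M}. \<phi> (b ^ (M - k)) * PP T M k)) = (\<Sum>k\<in>{1..M}. \<phi> e * f k)"
    unfolding f_def sum_distrib_left ..
  have "(\<Sum>k\<in>{1..M}. f k * T a) = (\<Sum>k\<in>{1..M}. \<phi> e * f k)"
  proof (rule sum_pair[of _ a "Suc a"])
    show "finite {1..M}" by simp
    show "a \<in> {1..M}" "Suc a \<in> {1..M}" "a \<noteq> Suc a" using a by auto
  next
    fix k assume k: "k \<in> {1..M}" "k \<noteq> a" "k \<noteq> Suc a"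
    show "f k * T a = \<phi> e * f k"
    proof (cases "k < a")
      case True
      have bm: "PP T M k * T a = T (a - 1) * PP T M k" using braid_move[of k a M] True k a M by simp
      have ab1: "X * T (a - 1) = \<phi> e * X" using ab[of "a - 1"] True k a M by auto
      have fk: "f k = \<phi> (b ^ (M - k)) * (X * PP T M k)" unfolding f_def by (rule hom_left[OF hom])
      have "f k * T a = X * (\<phi> (b ^ (M - k)) * (PP T M k * T a))" unfolding f_def by (simp only: mult.assoc)
      also have "\<dots> = X * (\<phi> (b ^ (M - k)) * (T (a - 1) * PP T M k))" unfolding bm ..
      also have "\<dots> = \<phi> (b ^ (M - k)) * (X * (T (a - 1) * PP T M k))" by (rule hom_left[OF hom])
      also have "X * (T (a - 1) * PP T M k) = \<phi> e * (X * PP T M k)"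
        by (simp only: mult.assoc[symmetric] ab1)
      also have "\<phi> (b ^ (M - k)) * (\<phi> e * (X * PP T M k)) = \<phi> e * (\<phi> (b ^ (M - k)) * (X * PP T M k))"
        by (rule hom_left[OF hom])
      finally show ?thesis unfolding fk .
    next
      case False
      hence ka: "Suc a < k" using k by simp
      have cm: "PP T M k * T a = T a * PP T M k"
        unfolding PP_def using ka k a M by (intro T_comm_list[symmetric]) auto
      have ab1: "X * T a = \<phi> e * X" using ab[of a] ka k a M by auto
      have fk: "f k = \<phi> (b ^ (M - k)) * (X * PP T M k)" unfolding f_def by (rule hom_left[OF hom])
      have "f k * T a = X * (\<phi> (b ^ (M - k)) * (PP T M k * T a))" unfolding f_def by (simp only: mult.assoc)
      also have "\<dots> = X * (\<phi> (b ^ (M - k)) * (T a * PP T M k))" unfolding cm ..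
      also have "\<dots> = \<phi> (b ^ (M - k)) * (X * (T a * PP T M k))" by (rule hom_left[OF hom])
      also have "X * (T a * PP T M k) = \<phi> e * (X * PP T M k)"
        by (simp only: mult.assoc[symmetric] ab1)
      also have "\<phi> (b ^ (M - k)) * (\<phi> e * (X * PP T M k)) = \<phi> e * (\<phi> (b ^ (M - k)) * (X * PP T M k))"
        by (rule hom_left[OF hom])
      finally show ?thesis unfolding fk .
    qed
  next
    show "f a * T a + f (Suc a) * T a = \<phi> e * f a + \<phi> e * f (Suc a)"
      unfolding f_def using hc_pair[OF a M(1) c1 c2, of X] by (simp add: distrib_left)
  qed
  thus ?thesis unfolding L R .
qed

lemma comm_step:
  assumes M: "M \<le> n" and j: "M < j" "j \<le> n" and cX: "c j * X = X * c j"
  shows "c j * (X * (\<Sum>k\<in>{1..M}. \<phi> (b ^ (M - k)) * PP T M k)) = (X * (\<Sum>k\<in>{1..M}. \<phi> (b ^ (M - k)) * PP T M k)) * c j"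
proof -
  have "c j * (\<Sum>k\<in>{1..M}. \<phi> (b ^ (M - k)) * PP T M k) = (\<Sum>k\<in>{1..M}. \<phi> (b ^ (M - k)) * PP T M k) * c j"
    unfolding sum_distrib_left sum_distrib_right
  proof (intro sum.cong refl)
    fix k assume k: "k \<in> {1..M}"
    have "c j * PP T M k = PP T M k * c j" unfolding PP_def using k M j by (intro c_comm_list) auto
    hence "\<phi> (b ^ (M - k)) * (c j * PP T M k) = \<phi> (b ^ (M - k)) * PP T M k * c j"
      by (simp only: mult.assoc)
    thus "c j * (\<phi> (b ^ (M - k)) * PP T M k) = \<phi> (b ^ (M - k)) * PP T M k * c j"
      by (simp only: hom_left[OF hom])
  qed
  hence "c j * X * (\<Sum>k\<in>{1..M}. \<phi> (b ^ (M - k)) * PP T M k) = X * ((\<Sum>k\<in>{1..M}. \<phi> (b ^ (M - k)) * PP T M k) * c j)"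
    unfolding cX by (simp only: mult.assoc)
  thus ?thesis by (simp only: mult.assoc)
qed

lemma x_k:
  assumes M: "Suc m \<le> n" and ab: "\<And>a. 1 \<le> a \<Longrightarrow> a < m \<Longrightarrow> X * T a = \<phi> q * X"
    and k: "1 \<le> k" "k \<le> Suc m"
  shows "X * (((\<Sum>j\<in>{1..<Suc m}. \<phi> q ^ (m - j) * c j) + \<phi> q ^ m * c (Suc m)) * PP T (Suc m) k)
    = (\<Sum>j\<in>{1..<k}. \<phi> q^(m-j) * (X * PP T (Suc m) k * c j))
      + (\<Sum>j\<in>{k..<Suc m}. \<phi> q^(m-j) * (X * PP T (Suc m) k * c (Suc j)
           + (\<phi> q - 1) * \<phi> q^(j-k) * (X * PP T (Suc m) (Suc j) * c k - X * PP T (Suc m) (Suc j) * c (Suc j))))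
      + \<phi> q^m * (X * PP T (Suc m) k * c k)"
proof -
  let ?P = "PP T (Suc m) k"
  have t: "X * ((\<phi> q ^ e * y) * ?P) = \<phi> q ^ e * (X * (y * ?P))" for e y
    by (simp only: mult.assoc Qpow_pull)
  have "X * (((\<Sum>j\<in>{1..<Suc m}. \<phi> q ^ (m - j) * c j) + \<phi> q ^ m * c (Suc m)) * ?P)
     = (\<Sum>j\<in>{1..<Suc m}. \<phi> q ^ (m - j) * (X * (c j * ?P))) + \<phi> q ^ m * (X * (c (Suc m) * ?P))"
    by (simp only: distrib_right distrib_left sum_distrib_left sum_distrib_right t)
  also have "(\<Sum>j\<in>{1..<Suc m}. \<phi> q ^ (m - j) * (X * (c j * ?P)))
     = (\<Sum>j\<in>{1..<k}. \<phi> q ^ (m - j) * (X * (c j * ?P))) + (\<Sum>j\<in>{k..<Suc m}. \<phi> q ^ (m - j) * (X * (c j * ?P)))"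
    by (rule sum.atLeastLessThan_concat[symmetric]) (use k in auto)
  also have "(\<Sum>j\<in>{1..<k}. \<phi> q ^ (m - j) * (X * (c j * ?P))) = (\<Sum>j\<in>{1..<k}. \<phi> q^(m-j) * (X * ?P * c j))"
  proof (intro sum.cong refl)
    fix j assume "j \<in> {1..<k}"
    hence "c j * ?P = ?P * c j" using k M by (intro F2) auto
    thus "\<phi> q ^ (m - j) * (X * (c j * ?P)) = \<phi> q^(m-j) * (X * ?P * c j)" by (simp add: mult.assoc)
  qed
  also have "(\<Sum>j\<in>{k..<Suc m}. \<phi> q ^ (m - j) * (X * (c j * ?P)))
    = (\<Sum>j\<in>{k..<Suc m}. \<phi> q^(m-j) * (X * ?P * c (Suc j)
           + (\<phi> q - 1) * \<phi> q^(j-k) * (X * PP T (Suc m) (Suc j) * c k - X * PP T (Suc m) (Suc j) * c (Suc j))))"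
  proof (intro sum.cong refl)
    fix j assume j: "j \<in> {k..<Suc m}"
    have "X * (c j * ?P) = X * ?P * c (Suc j) + (\<phi> q - 1) * (\<phi> q ^ (j - k) * (X * PP T (Suc m) (Suc j) * (c k - c (Suc j))))"
      using F3[OF ab Qc M] k j by auto
    thus "\<phi> q ^ (m - j) * (X * (c j * ?P)) = \<phi> q^(m-j) * (X * ?P * c (Suc j)
           + (\<phi> q - 1) * \<phi> q^(j-k) * (X * PP T (Suc m) (Suc j) * c k - X * PP T (Suc m) (Suc j) * c (Suc j)))"
      by (simp only: right_diff_distrib mult.assoc)
  qed
  also have "X * (c (Suc m) * ?P) = X * ?P * c k" using F1[of k "Suc m"] k M by (simp add: mult.assoc)
  finally show ?thesis .
qed

lemma x_main:
  assumes M: "Suc m \<le> n" and ab: "\<And>a. 1 \<le> a \<Longrightarrow> a < m \<Longrightarrow> X * T a = \<phi> q * X"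
    and IH: "X * c_q m (\<phi> q) c = c_q' m (\<phi> q) c * X"
    and cX: "c (Suc m) * X = X * c (Suc m)"
  shows "(X * (\<Sum>k\<in>{1..Suc m}. PP T (Suc m) k)) * c_q (Suc m) (\<phi> q) c
       = c_q' (Suc m) (\<phi> q) c * (X * (\<Sum>k\<in>{1..Suc m}. PP T (Suc m) k))"
proof -
  define W where "W k a = X * PP T (Suc m) k * c a" for k a
  define C' where "C' = (\<Sum>j\<in>{1..<Suc m}. \<phi> q ^ (m - j) * c j) + \<phi> q ^ m * c (Suc m)"
  have iv: "{1..Suc m} = {1..<Suc (Suc m)}" by auto
  have cq'S: "c_q' (Suc m) (\<phi> q) c = c_q' m (\<phi> q) c + \<phi> q ^ m * c (Suc m)"
    unfolding c_q'_def by simp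
  have cqm: "c_q m (\<phi> q) c = (\<Sum>j\<in>{1..<Suc m}. \<phi> q ^ (m - j) * c j)"
    unfolding c_q_def by (simp add: atLeastLessThanSuc_atLeastAtMost)
  have "c_q' (Suc m) (\<phi> q) c * X = X * C'"
  proof -
    have "c_q' (Suc m) (\<phi> q) c * X = c_q' m (\<phi> q) c * X + \<phi> q ^ m * (c (Suc m) * X)"
      unfolding cq'S by (simp add: distrib_right mult.assoc)
    also have "\<dots> = X * c_q m (\<phi> q) c + X * (\<phi> q ^ m * c (Suc m))"
      unfolding IH[symmetric] cX by (simp only: Qpow_pull)
    finally show ?thesis unfolding C'_def cqm by (simp add: distrib_left)
  qed
  hence "c_q' (Suc m) (\<phi> q) c * (X * (\<Sum>k\<in>{1..Suc m}. PP T (Suc m) k))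
      = X * (C' * (\<Sum>k\<in>{1..<Suc (Suc m)}. PP T (Suc m) k))"
    unfolding iv by (simp only: mult.assoc[symmetric])
  also have "\<dots> = (\<Sum>k\<in>{1..<Suc (Suc m)}. X * (C' * PP T (Suc m) k))"
    by (simp only: sum_distrib_left)
  also have "\<dots> = (\<Sum>k\<in>{1..<Suc (Suc m)}. (\<Sum>j\<in>{1..<k}. \<phi> q^(m-j) * W k j) + (\<Sum>j\<in>{k..<Suc m}. \<phi> q^(m-j) * (W k (Suc j) + (\<phi> q-1) * \<phi> q^(j-k) * (W (Suc j) k - W (Suc j) (Suc j)))) + \<phi> q^m * W k k)"
  proof (intro sum.cong refl)
    fix k assume "k \<in> {1..<Suc (Suc m)}"
    hence k: "1 \<le> k" "k \<le> Suc m" by auto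
    show "X * (C' * PP T (Suc m) k) = (\<Sum>j\<in>{1..<k}. \<phi> q^(m-j) * W k j) + (\<Sum>j\<in>{k..<Suc m}. \<phi> q^(m-j) * (W k (Suc j) + (\<phi> q-1) * \<phi> q^(j-k) * (W (Suc j) k - W (Suc j) (Suc j)))) + \<phi> q^m * W k k"
      unfolding C'_def W_def using x_k[OF M ab k] .
  qed
  also have "\<dots> = (\<Sum>k\<in>{1..<Suc (Suc m)}. \<Sum>a\<in>{1..<Suc (Suc m)}. \<phi> q^(Suc m - a) * W k a)"
    by (rule gen_x)
  also have "\<dots> = (\<Sum>k\<in>{1..<Suc (Suc m)}. (X * PP T (Suc m) k) * c_q (Suc m) (\<phi> q) c)"
  proof (intro sum.cong refl)
    fix k
    show "(\<Sum>a\<in>{1..<Suc (Suc m)}. \<phi> q^(Suc m - a) * W k a) = (X * PP T (Suc m) k) * c_q (Suc m) (\<phi> q) c"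
      unfolding c_q_def iv sum_distrib_left W_def
      by (intro sum.cong refl) (simp only: mult.assoc Qpow_pull)
  qed
  also have "\<dots> = (X * (\<Sum>k\<in>{1..Suc m}. PP T (Suc m) k)) * c_q (Suc m) (\<phi> q) c"
    unfolding iv by (simp only: sum_distrib_right[symmetric] sum_distrib_left[symmetric])
  finally show ?thesis by simp
qed

lemma y_k:
  assumes M: "Suc m \<le> n" and ab: "\<And>a. 1 \<le> a \<Longrightarrow> a < m \<Longrightarrow> X * T a = - X"
    and k: "1 \<le> k" "k \<le> Suc m"
  shows "X * (((\<Sum>j\<in>{1..<Suc m}. \<phi> q ^ j * c j) + c (Suc m)) * PP T (Suc m) k)
    = (\<Sum>j\<in>{1..<k}. \<phi> q^j * (X * PP T (Suc m) k * c j))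
      + (\<Sum>j\<in>{k..<Suc m}. \<phi> q^j * (X * PP T (Suc m) k * c (Suc j)
           + (\<phi> q - 1) * (-1)^(j-k) * (X * PP T (Suc m) (Suc j) * c k - X * PP T (Suc m) (Suc j) * c (Suc j))))
      + (X * PP T (Suc m) k * c k)"
proof -
  let ?P = "PP T (Suc m) k"
  have ab': "\<And>a. 1 \<le> a \<Longrightarrow> a < m \<Longrightarrow> X * T a = (-1) * X" using ab by simp
  have ec: "\<And>x. (-1::'a) * x = x * (-1)" by simp
  have t: "X * ((\<phi> q ^ e * y) * ?P) = \<phi> q ^ e * (X * (y * ?P))" for e y
    by (simp only: mult.assoc Qpow_pull)
  have "X * (((\<Sum>j\<in>{1..<Suc m}. \<phi> q ^ j * c j) + c (Suc m)) * ?P)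
     = (\<Sum>j\<in>{1..<Suc m}. \<phi> q ^ j * (X * (c j * ?P))) + (X * (c (Suc m) * ?P))"
    by (simp only: distrib_right distrib_left sum_distrib_left sum_distrib_right t)
  also have "(\<Sum>j\<in>{1..<Suc m}. \<phi> q ^ j * (X * (c j * ?P)))
     = (\<Sum>j\<in>{1..<k}. \<phi> q ^ j * (X * (c j * ?P))) + (\<Sum>j\<in>{k..<Suc m}. \<phi> q ^ j * (X * (c j * ?P)))"
    by (rule sum.atLeastLessThan_concat[symmetric]) (use k in auto)
  also have "(\<Sum>j\<in>{1..<k}. \<phi> q ^ j * (X * (c j * ?P))) = (\<Sum>j\<in>{1..<k}. \<phi> q^j * (X * ?P * c j))"
  proof (intro sum.cong refl)
    fix j assume "j \<in> {1..<k}"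
    hence "c j * ?P = ?P * c j" using k M by (intro F2) auto
    thus "\<phi> q ^ j * (X * (c j * ?P)) = \<phi> q^j * (X * ?P * c j)" by (simp add: mult.assoc)
  qed
  also have "(\<Sum>j\<in>{k..<Suc m}. \<phi> q ^ j * (X * (c j * ?P)))
    = (\<Sum>j\<in>{k..<Suc m}. \<phi> q^j * (X * ?P * c (Suc j)
           + (\<phi> q - 1) * (-1)^(j-k) * (X * PP T (Suc m) (Suc j) * c k - X * PP T (Suc m) (Suc j) * c (Suc j))))"
  proof (intro sum.cong refl)
    fix j assume j: "j \<in> {k..<Suc m}"
    have "X * (c j * ?P) = X * ?P * c (Suc j) + (\<phi> q - 1) * ((-1) ^ (j - k) * (X * PP T (Suc m) (Suc j) * (c k - c (Suc j))))"
      using F3[OF ab' ec M] k j by auto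
    thus "\<phi> q ^ j * (X * (c j * ?P)) = \<phi> q^j * (X * ?P * c (Suc j)
           + (\<phi> q - 1) * (-1)^(j-k) * (X * PP T (Suc m) (Suc j) * c k - X * PP T (Suc m) (Suc j) * c (Suc j)))"
      by (simp only: right_diff_distrib mult.assoc)
  qed
  also have "X * (c (Suc m) * ?P) = X * ?P * c k" using F1[of k "Suc m"] k M by (simp add: mult.assoc)
  finally show ?thesis .
qed

lemma coef_r:
  fixes x y :: 'r
  assumes qq: "x * y = 1" and jk: "1 \<le> j" "j < k" "k \<le> M"
  shows "(- y) ^ (M - j) * ((-1) ^ (k - 1 - j) * x ^ (k - 1)) = - ((- y) ^ (M - k) * x ^ (j - 1))"
proof -
  obtain e where d: "k - j = Suc e" using jk by (metis Suc_diff_Suc)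
  have e1: "M - j = (M - k) + Suc e" using d jk by simp
  have e2: "k - 1 = (j - 1) + Suc e" using d jk by simp
  have e3: "k - 1 - j = e" using d jk by simp
  have mm: "(-1::'r) ^ e * (-1) ^ e = 1" by (simp add: power_add[symmetric] mult_2[symmetric])
  have "(- y) ^ Suc e * ((-1) ^ e * x ^ Suc e) = - (((-1) ^ e * (-1) ^ e) * (x * y) ^ Suc e)"
    by (simp only: power_minus[of y] power_mult_distrib) (simp add: algebra_simps)
  also have "\<dots> = -1" using qq mm by simp
  finally have key: "(- y) ^ Suc e * ((-1) ^ e * x ^ Suc e) = -1" .
  have "(- y) ^ (M - j) * ((-1) ^ (k - 1 - j) * x ^ (k - 1))
      = (- y) ^ (M - k) * x ^ (j - 1) * ((- y) ^ Suc e * ((-1) ^ e * x ^ Suc e))"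
    unfolding e3 unfolding e1 e2 power_add by (simp add: algebra_simps)
  thus ?thesis unfolding key by simp
qed

lemma y_main:
  assumes M: "Suc m \<le> n" and ab: "\<And>a. 1 \<le> a \<Longrightarrow> a < m \<Longrightarrow> X * T a = - X"
    and qq: "q * q' = 1"
    and IH: "X * c_q' m (\<phi> q) c = c_q m (\<phi> q) c * X"
    and cX: "c (Suc m) * X = X * c (Suc m)"
  shows "(X * (\<Sum>k\<in>{1..Suc m}. \<phi> ((- q') ^ (Suc m - k)) * PP T (Suc m) k)) * c_q' (Suc m) (\<phi> q) c
       = c_q (Suc m) (\<phi> q) c * (X * (\<Sum>k\<in>{1..Suc m}. \<phi> ((- q') ^ (Suc m - k)) * PP T (Suc m) k))"
proof -
  define W where "W k a = X * PP T (Suc m) k * c a" for k a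
  define C' where "C' = (\<Sum>j\<in>{1..<Suc m}. \<phi> q ^ j * c j) + c (Suc m)"
  define \<beta> where "\<beta> = \<phi> (- q')"
  have bpow: "\<phi> ((- q') ^ e) = \<beta> ^ e" for e unfolding \<beta>_def by (rule hom_pow[OF hom])
  have iv: "{1..Suc m} = {1..<Suc (Suc m)}" by auto
  have cqS: "c_q (Suc m) (\<phi> q) c = \<phi> q * c_q m (\<phi> q) c + c (Suc m)"
  proof -
    have "c_q (Suc m) (\<phi> q) c = (\<Sum>k = 1..m. \<phi> q ^ (Suc m - k) * c k) + c (Suc m)"
      unfolding c_q_def by simp
    also have "(\<Sum>k = 1..m. \<phi> q ^ (Suc m - k) * c k) = \<phi> q * c_q m (\<phi> q) c"
      unfolding c_q_def sum_distrib_left by (intro sum.cong refl) (simp add: Suc_diff_le mult.assoc)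
    finally show ?thesis .
  qed
  have cq'm: "c_q' m (\<phi> q) c = (\<Sum>j\<in>{1..<Suc m}. \<phi> q ^ (j - 1) * c j)"
    unfolding c_q'_def by (simp add: atLeastLessThanSuc_atLeastAtMost)
  have "c_q (Suc m) (\<phi> q) c * X = X * C'"
  proof -
    have "c_q (Suc m) (\<phi> q) c * X = \<phi> q * (c_q m (\<phi> q) c * X) + c (Suc m) * X"
      unfolding cqS by (simp add: distrib_right mult.assoc)
    also have "\<dots> = \<phi> q * (X * c_q' m (\<phi> q) c) + X * c (Suc m)" unfolding IH cX ..
    also have "\<phi> q * (X * c_q' m (\<phi> q) c) = X * (\<Sum>j\<in>{1..<Suc m}. \<phi> q ^ j * c j)"
    proof -
      have "\<phi> q * (X * c_q' m (\<phi> q) c) = X * (\<phi> q * c_q' m (\<phi> q) c)" by (metis Qc mult.assoc)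
      also have "\<phi> q * c_q' m (\<phi> q) c = (\<Sum>j\<in>{1..<Suc m}. \<phi> q ^ j * c j)"
        unfolding cq'm sum_distrib_left
      proof (intro sum.cong refl)
        fix j assume "j \<in> {1..<Suc m}"
        hence "j = Suc (j - 1)" by auto
        hence "\<phi> q ^ j = \<phi> q * \<phi> q ^ (j - 1)" by (metis power_Suc)
        thus "\<phi> q * (\<phi> q ^ (j - 1) * c j) = \<phi> q ^ j * c j" by (simp add: mult.assoc)
      qed
      finally show ?thesis .
    qed
    finally show ?thesis unfolding C'_def by (simp add: distrib_left)
  qed
  hence "c_q (Suc m) (\<phi> q) c * (X * (\<Sum>k\<in>{1..Suc m}. \<phi> ((- q') ^ (Suc m - k)) * PP T (Suc m) k))
      = X * (C' * (\<Sum>k\<in>{1..<Suc (Suc m)}. \<beta> ^ (Suc m - k) * PP T (Suc m) k))"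
    unfolding iv bpow by (simp only: mult.assoc[symmetric])
  also have "\<dots> = (\<Sum>k\<in>{1..<Suc (Suc m)}. \<beta> ^ (Suc m - k) * (X * (C' * PP T (Suc m) k)))"
    unfolding sum_distrib_left
  proof (intro sum.cong refl)
    fix k
    show "X * (C' * (\<beta> ^ (Suc m - k) * PP T (Suc m) k)) = \<beta> ^ (Suc m - k) * (X * (C' * PP T (Suc m) k))"
      unfolding bpow[symmetric] by (metis hom_left[OF hom] mult.assoc)
  qed
  also have "\<dots> = (\<Sum>k\<in>{1..<Suc (Suc m)}. \<beta> ^ (Suc m - k) * ((\<Sum>j\<in>{1..<k}. \<phi> q^j * W k j) + (\<Sum>j\<in>{k..<Suc m}. \<phi> q^j * (W k (Suc j) + (\<phi> q-1) * (-1)^(j-k) * (W (Suc j) k - W (Suc j) (Suc j)))) + W k k))"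
  proof (intro sum.cong refl)
    fix k assume "k \<in> {1..<Suc (Suc m)}"
    hence k: "1 \<le> k" "k \<le> Suc m" by auto
    show "\<beta> ^ (Suc m - k) * (X * (C' * PP T (Suc m) k)) = \<beta> ^ (Suc m - k) * ((\<Sum>j\<in>{1..<k}. \<phi> q^j * W k j) + (\<Sum>j\<in>{k..<Suc m}. \<phi> q^j * (W k (Suc j) + (\<phi> q-1) * (-1)^(j-k) * (W (Suc j) k - W (Suc j) (Suc j)))) + W k k)"
      unfolding C'_def W_def using y_k[OF M ab k] by simp
  qed
  also have "\<dots> = (\<Sum>k\<in>{1..<Suc (Suc m)}. \<beta>^(Suc m - k) * (\<Sum>a\<in>{1..<Suc (Suc m)}. \<phi> q^(a - 1) * W k a))"
  proof (rule gen_y)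
    show "\<beta> * \<phi> q = \<phi> q * \<beta>" unfolding \<beta>_def by (rule hom_c[OF hom])
  next
    fix j k assume jk: "1 \<le> j" "j < k" "k \<le> Suc m"
    have "\<phi> ((- q') ^ (Suc m - j) * ((-1) ^ (k - 1 - j) * q ^ (k - 1))) = \<phi> (- ((- q') ^ (Suc m - k) * q ^ (j - 1)))"
      using coef_r[OF qq jk] by simp
    thus "\<beta> ^ (Suc m - j) * ((-1) ^ (k - 1 - j) * \<phi> q ^ (k - 1)) = - (\<beta> ^ (Suc m - k) * \<phi> q ^ (j - 1))"
      unfolding \<beta>_def by (simp add: hom_simps[OF hom])
  qed
  also have "\<dots> = (\<Sum>k\<in>{1..<Suc (Suc m)}. (X * (\<beta> ^ (Suc m - k) * PP T (Suc m) k)) * c_q' (Suc m) (\<phi> q) c)"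
  proof (intro sum.cong refl)
    fix k
    have "(\<Sum>a\<in>{1..<Suc (Suc m)}. \<phi> q^(a - 1) * W k a) = (X * PP T (Suc m) k) * c_q' (Suc m) (\<phi> q) c"
      unfolding c_q'_def iv sum_distrib_left W_def
      by (intro sum.cong refl) (simp only: mult.assoc Qpow_pull)
    thus "\<beta>^(Suc m - k) * (\<Sum>a\<in>{1..<Suc (Suc m)}. \<phi> q^(a - 1) * W k a) = (X * (\<beta> ^ (Suc m - k) * PP T (Suc m) k)) * c_q' (Suc m) (\<phi> q) c"
      unfolding bpow[symmetric] by (metis hom_left[OF hom] mult.assoc)
  qed
  also have "\<dots> = (X * (\<Sum>k\<in>{1..Suc m}. \<phi> ((- q') ^ (Suc m - k)) * PP T (Suc m) k)) * c_q' (Suc m) (\<phi> q) c"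
    unfolding iv bpow by (simp only: sum_distrib_right[symmetric] sum_distrib_left[symmetric])
  finally show ?thesis by simp
qed

end




context hcp
begin

lemma braid_rel_le: "m \<le> n \<Longrightarrow> braid_rel m T"
  unfolding braid_rel_def using comm braid by auto

lemma x_ind:
  "m \<le> n \<Longrightarrow> (\<forall>a. 1 \<le> a \<longrightarrow> a < m \<longrightarrow> x_sym m T * T a = \<phi> q * x_sym m T) \<and>
     (\<forall>j. m < j \<longrightarrow> j \<le> n \<longrightarrow> c j * x_sym m T = x_sym m T * c j) \<and>
     x_sym m T * c_q m (\<phi> q) c = c_q' m (\<phi> q) c * x_sym m T"
proof (induction m)
  case 0 thus ?case by (simp add: x_sym0 c_q_def c_q'_def)
next
  case (Suc m)
  define X where "X = x_sym m T"
  have IH: "\<And>a. 1 \<le> a \<Longrightarrow> a < m \<Longrightarrow> X * T a = \<phi> q * X"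
    "\<And>j. m < j \<Longrightarrow> j \<le> n \<Longrightarrow> c j * X = X * c j"
    "X * c_q m (\<phi> q) c = c_q' m (\<phi> q) c * X" using Suc unfolding X_def by auto
  have E: "(\<Sum>k\<in>{1..Suc m}. PP T (Suc m) k) = (\<Sum>k\<in>{1..Suc m}. \<phi> (1 ^ (Suc m - k)) * PP T (Suc m) k)"
    by (simp add: hom_1[OF hom])
  have xs: "x_sym (Suc m) T = X * (\<Sum>k\<in>{1..Suc m}. PP T (Suc m) k)"
    unfolding X_def using x_sym_Suc[OF braid_rel_le[OF Suc.prems]] .
  have A: "\<forall>a. 1 \<le> a \<longrightarrow> a < Suc m \<longrightarrow> x_sym (Suc m) T * T a = \<phi> q * x_sym (Suc m) T"
    unfolding xs E using absorb_step[OF Suc.prems refl IH(1), of 1] by simp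
  have B: "\<forall>j. Suc m < j \<longrightarrow> j \<le> n \<longrightarrow> c j * x_sym (Suc m) T = x_sym (Suc m) T * c j"
  proof (intro allI impI)
    fix j assume j: "Suc m < j" "j \<le> n"
    show "c j * x_sym (Suc m) T = x_sym (Suc m) T * c j"
      unfolding xs E by (rule comm_step[OF Suc.prems j IH(2)]) (use j in auto)
  qed
  have C: "x_sym (Suc m) T * c_q (Suc m) (\<phi> q) c = c_q' (Suc m) (\<phi> q) c * x_sym (Suc m) T"
    unfolding xs using x_main[OF Suc.prems IH(1) IH(3) IH(2)[of "Suc m"]] Suc.prems by simp
  show ?case using A B C by blast
qed

lemma y_ind:
  assumes qq: "q * q' = 1"
  shows "m \<le> n \<Longrightarrow> (\<forall>a. 1 \<le> a \<longrightarrow> a < m \<longrightarrow> y_sym m (\<phi> q') T * T a = - y_sym m (\<phi> q') T) \<and>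
     (\<forall>j. m < j \<longrightarrow> j \<le> n \<longrightarrow> c j * y_sym m (\<phi> q') T = y_sym m (\<phi> q') T * c j) \<and>
     y_sym m (\<phi> q') T * c_q' m (\<phi> q) c = c_q m (\<phi> q) c * y_sym m (\<phi> q') T"
proof (induction m)
  case 0 thus ?case by (simp add: y_sym0 c_q_def c_q'_def)
next
  case (Suc m)
  define X where "X = y_sym m (\<phi> q') T"
  have IH: "\<And>a. 1 \<le> a \<Longrightarrow> a < m \<Longrightarrow> X * T a = - X"
    "\<And>j. m < j \<Longrightarrow> j \<le> n \<Longrightarrow> c j * X = X * c j"
    "X * c_q' m (\<phi> q) c = c_q m (\<phi> q) c * X" using Suc unfolding X_def by auto
  have ab': "\<And>a. 1 \<le> a \<Longrightarrow> a < m \<Longrightarrow> X * T a = \<phi> (-1) * X"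
    using IH(1) by (simp add: hom_uminus[OF hom] hom_1[OF hom])
  have E: "(\<Sum>k\<in>{1..Suc m}. (- \<phi> q') ^ (Suc m - k) * PP T (Suc m) k) = (\<Sum>k\<in>{1..Suc m}. \<phi> ((- q') ^ (Suc m - k)) * PP T (Suc m) k)"
    by (simp add: hom_pow[OF hom] hom_uminus[OF hom])
  have ys: "y_sym (Suc m) (\<phi> q') T = X * (\<Sum>k\<in>{1..Suc m}. \<phi> ((- q') ^ (Suc m - k)) * PP T (Suc m) k)"
    unfolding X_def E[symmetric] using y_sym_Suc[OF braid_rel_le[OF Suc.prems]] hom_c[OF hom] by blast
  have c1: "- q' * q = -1" using qq by (simp add: mult.commute)
  have c2: "- q' * (q - 1) + 1 = -1 * - q'" using qq by (simp add: algebra_simps)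
  have A: "\<forall>a. 1 \<le> a \<longrightarrow> a < Suc m \<longrightarrow> y_sym (Suc m) (\<phi> q') T * T a = - y_sym (Suc m) (\<phi> q') T"
    unfolding ys using absorb_step[OF Suc.prems refl ab' c1 c2] by (simp add: hom_uminus[OF hom] hom_1[OF hom])
  have B: "\<forall>j. Suc m < j \<longrightarrow> j \<le> n \<longrightarrow> c j * y_sym (Suc m) (\<phi> q') T = y_sym (Suc m) (\<phi> q') T * c j"
  proof (intro allI impI)
    fix j assume j: "Suc m < j" "j \<le> n"
    show "c j * y_sym (Suc m) (\<phi> q') T = y_sym (Suc m) (\<phi> q') T * c j"
      unfolding ys by (rule comm_step[OF Suc.prems j IH(2)]) (use j in auto)
  qed
  have C: "y_sym (Suc m) (\<phi> q') T * c_q' (Suc m) (\<phi> q) c = c_q (Suc m) (\<phi> q) c * y_sym (Suc m) (\<phi> q') T"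
    unfolding ys using y_main[OF Suc.prems IH(1) qq IH(3) IH(2)[of "Suc m"]] Suc.prems by simp
  show ?case using A B C by blast
qed

end

theorem lemma4p1:
  fixes \<phi> :: "'r::comm_ring_1 \<Rightarrow> 'a::ring_1"
    and q :: 'r and r :: nat
    and T c :: "nat \<Rightarrow> 'a"
  assumes two_nzd: "\<forall>x::'r. 2 * x = 0 \<longrightarrow> x = 0"
    and hom: "central_ring_hom \<phi>"
    and rel: "HC_relations r (\<phi> q) T c"
    and r1: "r \<ge> 1"
  shows "x_sym r T * c_q r (\<phi> q) c = c_q' r (\<phi> q) c * x_sym r T \<and>
         (\<forall>q'. q * q' = 1 \<longrightarrow>
           y_sym r (\<phi> q') T * c_q' r (\<phi> q) c = c_q r (\<phi> q) c * y_sym r (\<phi> q') T)"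
proof -
  interpret hcp r \<phi> q T c
  proof (unfold_locales)
    show "central_ring_hom \<phi>" by (rule hom)
    show "\<And>x. \<phi> q * x = x * \<phi> q" by (rule hom_c[OF hom])
  next
    fix i assume i: "1 \<le> i" "i < r"
    have "(T i - \<phi> q) * (T i + 1) = 0" using rel i by (auto simp: HC_relations_def)
    moreover have "T i * T i = (T i - \<phi> q) * (T i + 1) + ((\<phi> q - 1) * T i + \<phi> q)"
      by (simp add: algebra_simps)
    ultimately show "T i * T i = (\<phi> q - 1) * T i + \<phi> q" by simp
  next
    fix i j assume "1 \<le> i" "i < r" "1 \<le> j" "j < r" "Suc i < j \<or> Suc j < i"
    thus "T i * T j = T j * T i" using rel by (auto simp: HC_relations_def)
  next
    fix i assume "1 \<le> i" "Suc i < r"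
    thus "T i * T (Suc i) * T i = T (Suc i) * T i * T (Suc i)" using rel by (auto simp: HC_relations_def)
  next
    fix i j assume "1 \<le> i" "i < r" "1 \<le> j" "j \<le> r" "j \<noteq> i" "j \<noteq> Suc i"
    thus "T i * c j = c j * T i" using rel by (auto simp: HC_relations_def)
  next
    fix i assume "1 \<le> i" "i < r"
    thus "T i * c i = c (Suc i) * T i" using rel by (auto simp: HC_relations_def)
  next
    fix i assume "1 \<le> i" "i < r"
    thus "T i * c (Suc i) = c i * T i - (\<phi> q - 1) * (c i - c (Suc i))" using rel by (auto simp: HC_relations_def)
  qed
  show ?thesis using x_ind[of r] y_ind[of _ r] by auto
qed


end
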